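(* Assume there is a unique best arm $k^*=\arg\max_k\mu_k$, let $\Delta_k=\mu_{k^*}-\mu_k$ and $\Delta=\min_{k\ne k^*}\Delta_k$, and let $\hat k(T,B)$ be the arm returned by Algorithm SRIS (described in the context) with total sample budget $T$ and cost budget $B$. Define $$\mathcal{R}^*(\Delta_k)=\Big\{s\in[K]:\Big\lfloor\log_2\Big(\frac{10}{\Delta_s}\Big)\Big\rfloor\ge\Big\lfloor\log_2\Big(\frac{10}{\Delta_k}\Big)\Big\rfloor\Big\}$$ (with $\log_2(10/0)=+\infty$), $$\bar H_k=\max_{\{l:\Delta_l\ge\Delta_k\}}\frac{\log_2(10/\Delta_l)^3}{(\Delta_l/10)^2\,v^*(B,\mathcal{R}^*(\Delta_l))^2},\qquad \bar H=\max_{k\ne k^*}\frac{\log_2(10/\Delta_k)^3}{(\Delta_k/10)^2\,v^*(B,\mathcal{R}^*(\Delta_k))^2}.$$ Then: 1. The simple regret $r(T,B)=\sum_{k\neq k^*}\Delta_k\,\mathbb{P}(\hat k(T,B)=k)$ satisfies $$r(T,B)\le 2K^2\sum_{\substack{k\ne k^*:\\ \Delta_k\ge 10/\sqrt T}}\Delta_k\log_2\Big(\frac{20}{\Delta_k}\Big)\exp\Big(-\frac{T}{2\bar H_k\,\overline{\log}(n(T))}\Big)+\frac{10}{\sqrt T}\,\mathbf{1}\big\{\exists k\ne k^*:\ \Delta_k<10/\sqrt T\big\}.$$ 2. If $\Delta_k\ge 10/\sqrt T$ for all $k\ne k^*$, the error probability $e(T,B)=\mathbb{P}(\hat k(T,B)\ne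 k^* )$ satisfies $$e(T,B)\le 2K^2\log_2(20/\Delta)\exp\Big(-\frac{T}{2\bar H\,\overline{\log}(n(T))}\Big).$$
   Context: Setting: $\mathcal{G}$ is a causal directed acyclic graph viewed as a Bayesian network. $V$ is a node with parent set $pa(V)$; $V$ and $pa(V)$ take values in finite sets. $Y$ is a node downstream of $V$ with values in $[0,1]$. There are $K$ arms indexed by $[K]=\{0,\dots,K-1\}$: under arm $k$ the conditional law of $V$ given $pa(V)$ is a known conditional distribution $\mathrm{P}_k(V\mid pa(V))$ while all other conditionals (hence the marginal law of $pa(V)$) are unchanged; these are mutually absolutely continuous. $\mu_k=\mathbb{E}_k[Y]$, expectation under arm $k$. Pulling arm $j$ yields an observation of $(Y,V,pa(V))$ from the joint law under arm $j$, independent of all other observations. Logarithms $\log$ are natural. Divergences: $D_{f_1}(\mathrm{P}_k\Vert\mathrm{P}_j)=\mathbb{E}_j[f_1(\mathrm{P}_k(V\mid pa(V))/\mathrm{P}_j(V\mid pa(V)))]$ with $f_1(x)=x\exp(x-1)-1$, and $M_{kj}=1+\log(1+D_{f_1}(\mathrm{P}_k\Vert\mathrm{P}_j))$. Budget: costs $c_i\ge0$ and cost budget $B$. For nonempty $\mathcal{R}\subseteq[K]$, $v^*(B,\mathcal{R})=\max_\nu\min_{k\in\mathcal{R}}\sum_j\nu_j/M_{kj}$ subject to $\sum_ic_i\nu_i\le B$, $\sum_j\nu_j=1$, $\nu\ge0$ (assumed feasible), with maximizer $\nu^*(B,\mathcal{R})$. Estimator: given $\tau_j$ samples from each arm $j$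 ($\mathcal{T}_j$ their indices), $Z_k=\sum_j\tau_j/M_{kj}$ and $\hat Y_k^{\epsilon}=\frac1{Z_k}\sum_j\sum_{s\in\mathcal{T}_j}\frac{1}{M_{kj}}Y_j(s)r_{kj}(s)\mathbf{1}\{r_{kj}(s)\le 2\log(2/\epsilon)M_{kj}\}$, where $r_{kj}(s)=\mathrm{P}_k(V_j(s)\mid pa(V)_j(s))/\mathrm{P}_j(V_j(s)\mid pa(V)_j(s))$. Algorithm SRIS: let $n(T)=\lceil\log_2(10\sqrt T)\rceil$, $\overline{\log}(n)=\sum_{i=1}^n 1/i$, and $\tau(l)=T/(l\,\overline{\log}(n(T)))$ (rounding ignored). Start with $\mathcal{R}=[K]$. For phases $l=1,\dots,n(T)$: allocate $\tau_j(l)=\nu^*_j(B,\mathcal{R})\tau(l)$ and pull arm $j$ $\tau_j(l)$ times; for each $k\in\mathcal{R}$ compute $\hat Y_k=\hat Y_k^{\epsilon}$ with $\epsilon=2^{-(l-1)}$ using only the samples of phase $l$; let $\hat Y_H=\max_{k\in\mathcal{R}}\hat Y_k$; remove from $\mathcal{R}$ every $k$ with $\hat Y_H>\hat Y_k+5/2^l$; if $|\mathcal{R}|=1$, return its arm. If all phases finish, return an arm chosen uniformly at random from $\mathcal{R}$. This returned arm is $\hat k(T,B)$. *)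

theory Defs
  imports "HOL-Probability.Probability"
begin

text \<open>Values of pa(V) live in the finite type 'p, values of V in the finite type 'v.
  q is the (arm-independent) law of pa(V); P k p is the conditional law of V given
  pa(V) = p under arm k; Yk v p is the (arm-independent) conditional law of Y given
  V = v, pa(V) = p.  Arms are the naturals below K.\<close>

definition arm_law ::
  "('p::finite) pmf \<Rightarrow> (nat \<Rightarrow> 'p \<Rightarrow> ('v::finite) pmf) \<Rightarrow> ('v \<Rightarrow> 'p \<Rightarrow> real measure)
   \<Rightarrow> nat \<Rightarrow> (real \<times> ('v \<times> 'p)) measure" where
  "arm_law q P Yk j =
     measure_pmf q \<bind> (\<lambda>p. measure_pmf (P j p) \<bind>
       (\<lambda>v. distr (Yk v p) (borel \<Otimes>\<^sub>M count_space UNIV) (\<lambda>y. (y, (v, p)))))"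

definition arm_mean ::
  "('p::finite) pmf \<Rightarrow> (nat \<Rightarrow> 'p \<Rightarrow> ('v::finite) pmf) \<Rightarrow> ('v \<Rightarrow> 'p \<Rightarrow> real measure)
   \<Rightarrow> nat \<Rightarrow> real" where
  "arm_mean q P Yk k = integral\<^sup>L (arm_law q P Yk k) fst"

definition f1 :: "real \<Rightarrow> real" where
  "f1 x = x * exp (x - 1) - 1"

definition Df1 :: "('p::finite) pmf \<Rightarrow> (nat \<Rightarrow> 'p \<Rightarrow> ('v::finite) pmf) \<Rightarrow> nat \<Rightarrow> nat \<Rightarrow> real" where
  "Df1 q P k j = (\<Sum>p\<in>UNIV. pmf q p * (\<Sum>v\<in>UNIV. pmf (P j p) v *
       f1 (pmf (P k p) v / pmf (P j p) v)))"

definition Mdiv :: "('p::finite) pmf \<Rightarrow> (nat \<Rightarrow> 'p \<Rightarrow> ('v::finite) pmf) \<Rightarrow> nat \<Rightarrow> nat \<Rightarrow> real" where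
  "Mdiv q P k j = 1 + ln (1 + Df1 q P k j)"

definition feasible :: "nat \<Rightarrow> (nat \<Rightarrow> real) \<Rightarrow> real \<Rightarrow> (nat \<Rightarrow> real) \<Rightarrow> bool" where
  "feasible K c B \<nu> \<longleftrightarrow> (\<forall>j<K. 0 \<le> \<nu> j) \<and> (\<Sum>j<K. \<nu> j) = 1 \<and> (\<Sum>i<K. c i * \<nu> i) \<le> B"

definition alloc_obj :: "nat \<Rightarrow> (nat \<Rightarrow> nat \<Rightarrow> real) \<Rightarrow> nat set \<Rightarrow> (nat \<Rightarrow> real) \<Rightarrow> real" where
  "alloc_obj K M R \<nu> = Min ((\<lambda>k. \<Sum>j<K. \<nu> j / M k j) ` R)"

definition vstar :: "nat \<Rightarrow> (nat \<Rightarrow> nat \<Rightarrow> real) \<Rightarrow> (nat \<Rightarrow> real) \<Rightarrow> real \<Rightarrow> nat set \<Rightarrow> real" where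
  "vstar K M c B R = (SUP \<nu>\<in>{\<nu>. feasible K c B \<nu>}. alloc_obj K M R \<nu>)"

definition is_alloc_maximizer ::
  "nat \<Rightarrow> (nat \<Rightarrow> nat \<Rightarrow> real) \<Rightarrow> (nat \<Rightarrow> real) \<Rightarrow> real \<Rightarrow> nat set \<Rightarrow> (nat \<Rightarrow> real) \<Rightarrow> bool" where
  "is_alloc_maximizer K M c B R \<nu> \<longleftrightarrow>
     feasible K c B \<nu> \<and> alloc_obj K M R \<nu> = vstar K M c B R"

definition n_phases :: "nat \<Rightarrow> nat" where
  "n_phases T = nat \<lceil>log 2 (10 * sqrt (real T))\<rceil>"

definition hlog :: "nat \<Rightarrow> real" where
  "hlog n = (\<Sum>i=1..n. 1 / real i)"

definition tau :: "nat \<Rightarrow> nat \<Rightarrow> real" where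
  "tau T l = real T / (real l * hlog (n_phases T))"

definition pulls :: "(nat \<Rightarrow> real) \<Rightarrow> nat \<Rightarrow> nat \<Rightarrow> nat \<Rightarrow> nat" where
  "pulls \<nu> T l j = nat \<lceil>\<nu> j * tau T l\<rceil>"

definition iw_ratio :: "(nat \<Rightarrow> 'p \<Rightarrow> 'v pmf) \<Rightarrow> nat \<Rightarrow> nat \<Rightarrow> real \<times> ('v \<times> 'p) \<Rightarrow> real" where
  "iw_ratio P k j x = pmf (P k (snd (snd x))) (fst (snd x)) / pmf (P j (snd (snd x))) (fst (snd x))"

text \<open>Truncated importance-sampling estimator Yhat_k^eps; the observation from arm j
  with index s is omega (j, s), for s < m j.\<close>
definition est :: "nat \<Rightarrow> (nat \<Rightarrow> nat \<Rightarrow> real) \<Rightarrow> (nat \<Rightarrow> 'p \<Rightarrow> 'v pmf) \<Rightarrow> (nat \<Rightarrow> nat)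
    \<Rightarrow> real \<Rightarrow> nat \<Rightarrow> (nat \<times> nat \<Rightarrow> real \<times> ('v \<times> 'p)) \<Rightarrow> real" where
  "est K M P m \<epsilon> k \<omega> =
     (let Z = (\<Sum>j<K. real (m j) / M k j) in
      (1 / Z) * (\<Sum>j<K. \<Sum>s<m j. (1 / M k j) * fst (\<omega> (j, s)) * iw_ratio P k j (\<omega> (j, s)) *
          (if iw_ratio P k j (\<omega> (j, s)) \<le> 2 * ln (2 / \<epsilon>) * M k j then 1 else 0)))"

definition eliminate :: "nat \<Rightarrow> nat set \<Rightarrow> (nat \<Rightarrow> real) \<Rightarrow> nat set" where
  "eliminate l R Yh = {k \<in> R. \<not> (Max (Yh ` R) > Yh k + 5 / 2 ^ l)}"

definition sris_phase ::
  "nat \<Rightarrow> ('p::finite) pmf \<Rightarrow> (nat \<Rightarrow> 'p \<Rightarrow> ('v::finite) pmf) \<Rightarrow> ('v \<Rightarrow> 'p \<Rightarrow> real measure)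
   \<Rightarrow> (nat set \<Rightarrow> nat \<Rightarrow> real) \<Rightarrow> nat \<Rightarrow> nat \<Rightarrow> nat set \<Rightarrow> nat set measure" where
  "sris_phase K q P Yk nu T l R =
     (if card R \<le> 1 then return (count_space UNIV) R
      else (let m = pulls (nu R) T l;
                I = {(j, s). j < K \<and> s < m j} in
            distr (PiM I (\<lambda>(j, s). arm_law q P Yk j)) (count_space UNIV)
              (\<lambda>\<omega>. eliminate l R (\<lambda>k. est K (Mdiv q P) P m ((1/2) ^ (l - 1)) k \<omega>))))"

primrec sris_run ::
  "nat \<Rightarrow> ('p::finite) pmf \<Rightarrow> (nat \<Rightarrow> 'p \<Rightarrow> ('v::finite) pmf) \<Rightarrow> ('v \<Rightarrow> 'p \<Rightarrow> real measure)
   \<Rightarrow> (nat set \<Rightarrow> nat \<Rightarrow> real) \<Rightarrow> nat \<Rightarrow> nat \<Rightarrow> nat set measure" where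
  "sris_run K q P Yk nu T 0 = return (count_space UNIV) {..<K}"
| "sris_run K q P Yk nu T (Suc l) =
     sris_run K q P Yk nu T l \<bind> sris_phase K q P Yk nu T (Suc l)"

definition sris_output ::
  "nat \<Rightarrow> ('p::finite) pmf \<Rightarrow> (nat \<Rightarrow> 'p \<Rightarrow> ('v::finite) pmf) \<Rightarrow> ('v \<Rightarrow> 'p \<Rightarrow> real measure)
   \<Rightarrow> (nat set \<Rightarrow> nat \<Rightarrow> real) \<Rightarrow> nat \<Rightarrow> nat measure" where
  "sris_output K q P Yk nu T =
     sris_run K q P Yk nu T (n_phases T) \<bind> (\<lambda>R. measure_pmf (pmf_of_set R))"

definition gap_level :: "real \<Rightarrow> ereal" where
  "gap_level d = (if d = 0 then \<infinity> else ereal (real_of_int \<lfloor>log 2 (10 / d)\<rfloor>))"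

definition Rstar :: "nat \<Rightarrow> (nat \<Rightarrow> real) \<Rightarrow> real \<Rightarrow> nat set" where
  "Rstar K \<Delta> d = {s. s < K \<and> gap_level (\<Delta> s) \<ge> gap_level d}"

definition Hterm :: "nat \<Rightarrow> (nat \<Rightarrow> nat \<Rightarrow> real) \<Rightarrow> (nat \<Rightarrow> real) \<Rightarrow> real \<Rightarrow> (nat \<Rightarrow> real) \<Rightarrow> nat \<Rightarrow> real" where
  "Hterm K M c B \<Delta> l =
     (log 2 (10 / \<Delta> l)) ^ 3 / ((\<Delta> l / 10) ^ 2 * (vstar K M c B (Rstar K \<Delta> (\<Delta> l))) ^ 2)"

end

theory Submission
  imports Defs
begin



lemma exp_le_quad:
  fixes x :: real assumes "\<bar>x\<bar> \<le> 1" shows "exp x \<le> 1 + x + x\<^sup>2"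
proof (cases "x \<ge> 0")
  case True thus ?thesis using exp_bound[of x] assms by auto
next
  case False
  define y where "y = - x"
  have y: "0 \<le> y" "y \<le> 1" using False assms by (auto simp: y_def)
  have e1: "exp y \<ge> 1 + y + y\<^sup>2/4"
  proof -
    have "exp y = (exp (y/2))\<^sup>2" by (simp add: power2_eq_square exp_add[symmetric])
    moreover have "1 + y/2 \<le> exp (y/2)" by (rule exp_ge_add_one_self)
    hence "(1 + y/2)\<^sup>2 \<le> (exp (y/2))\<^sup>2" using y by (intro power_mono) auto
    ultimately show ?thesis by (simp add: power2_eq_square field_simps)
  qed
  have "1 - y + y\<^sup>2 = (y - 1/2)\<^sup>2 + 3/4" by (simp add: power2_eq_square algebra_simps)
  hence pos: "0 < 1 - y + y\<^sup>2" using zero_le_power2[of "y - 1/2"] by linarith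
  have "(1 + y + y\<^sup>2/4) * (1 - y + y\<^sup>2) = 1 + (y\<^sup>2/4 + 3*y^3/4 + y^4/4)"
    by (simp add: power2_eq_square power3_eq_cube power4_eq_xxxx field_simps)
  also have "\<dots> \<ge> 1" using y by simp
  finally have "1 \<le> (1 + y + y\<^sup>2/4) * (1 - y + y\<^sup>2)" .
  also have "\<dots> \<le> exp y * (1 - y + y\<^sup>2)" using e1 pos by (intro mult_right_mono) auto
  finally have "1 \<le> exp y * (1 - y + y\<^sup>2)" .
  hence "exp x \<le> 1 - y + y\<^sup>2"
    by (simp add: y_def exp_minus field_simps)
  thus ?thesis by (simp add: y_def)
qed

lemma exp_convex_bound:
  fixes a x \<theta> :: real assumes "0 < a" "0 \<le> x" "x \<le> a"
  shows "exp (\<theta> * x) \<le> 1 + x * (exp (\<theta> * a) - 1) / a"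
proof -
  define t where "t = x / a"
  have t: "0 \<le> t" "t \<le> 1" using assms by (auto simp: t_def)
  have "exp ((1 - t) *\<^sub>R 0 + t *\<^sub>R (\<theta>*a)) \<le> (1 - t) * exp 0 + t * exp (\<theta>*a)"
    by (rule convex_onD[OF exp_convex]) (use t in auto)
  moreover have "(1 - t) *\<^sub>R 0 + t *\<^sub>R (\<theta>*a) = \<theta> * x" using assms by (simp add: t_def)
  moreover have "(1 - t) * exp 0 + t * exp (\<theta>*a) = 1 + x * (exp (\<theta> * a) - 1) / a"
    using assms by (simp add: t_def field_simps)
  ultimately show ?thesis by metis
qed




lemma chernoff_PiM:
  fixes M :: "'i \<Rightarrow> 'a measure" and X :: "'i \<Rightarrow> 'a \<Rightarrow> real" and w :: "'i \<Rightarrow> real"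
  assumes prob: "\<And>i. prob_space (M i)" and fin: "finite I"
    and meas: "\<And>i. i \<in> I \<Longrightarrow> X i \<in> borel_measurable (M i)"
    and bnd: "\<And>i. i \<in> I \<Longrightarrow> AE x in M i. 0 \<le> X i x \<and> X i x \<le> a"
    and Ew: "\<And>i. i \<in> I \<Longrightarrow> integral\<^sup>L (M i) (X i) \<le> w i"
    and a: "0 < a" and th: "\<bar>\<theta> * a\<bar> \<le> 1"
    and quad: "\<And>y::real. \<bar>y\<bar> \<le> 1 \<Longrightarrow> exp y \<le> 1 + y + y\<^sup>2"
    and cvx: "\<And>x t::real. 0 \<le> x \<Longrightarrow> x \<le> a \<Longrightarrow> exp (t * x) \<le> 1 + x * (exp (t * a) - 1) / a"
  shows "emeasure (PiM I M) {\<omega> \<in> space (PiM I M).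
            \<theta> * ((\<Sum>i\<in>I. X i (\<omega> i)) - (\<Sum>i\<in>I. integral\<^sup>L (M i) (X i))) \<ge> lam}
         \<le> ennreal (exp (\<theta>\<^sup>2 * a * (\<Sum>i\<in>I. w i) - lam))"
proof -
  interpret product_prob_space M I
    by (simp add: prob product_prob_space_def product_prob_space_axioms_def
        product_sigma_finite_def prob_space_imp_sigma_finite)
  define E where "E i = integral\<^sup>L (M i) (X i)" for i
  define c where "c = (exp (\<theta> * a) - 1) / a"
  define C where "C = exp (- lam - \<theta> * (\<Sum>i\<in>I. E i))"
  have intX: "integrable (M i) (X i)" if "i \<in> I" for i
  proof (rule M.integrable_const_bound[where B=a])
    show "AE x in M i. norm (X i x) \<le> a" using bnd[OF that] by (rule eventually_mono) auto
  qed (use meas[OF that] in auto)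
  have E0: "0 \<le> E i" if "i \<in> I" for i
    unfolding E_def using bnd[OF that] by (intro integral_nonneg_AE) (auto elim!: eventually_mono)
  have step1: "\<And>i. i \<in> I \<Longrightarrow> (\<integral>\<^sup>+x. ennreal (exp (\<theta> * X i x)) \<partial>M i) \<le> ennreal (exp (c * E i))"
  proof -
    fix i assume i: "i \<in> I"
    have "(\<integral>\<^sup>+x. ennreal (exp (\<theta> * X i x)) \<partial>M i) \<le> (\<integral>\<^sup>+x. ennreal (1 + c * X i x) \<partial>M i)"
    proof (rule nn_integral_mono_AE)
      show "AE x in M i. ennreal (exp (\<theta> * X i x)) \<le> ennreal (1 + c * X i x)"
        using bnd[OF i]
      proof (rule eventually_mono)
        fix x assume "0 \<le> X i x \<and> X i x \<le> a"
        hence "exp (\<theta> * X i x) \<le> 1 + c * X i x" using cvx[of "X i x" \<theta>] by (auto simp: c_def field_simps)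
        thus "ennreal (exp (\<theta> * X i x)) \<le> ennreal (1 + c * X i x)" by (rule ennreal_leI)
      qed
    qed
    also have "\<dots> = ennreal (integral\<^sup>L (M i) (\<lambda>x. 1 + c * X i x))"
    proof (rule nn_integral_eq_integral)
      show "integrable (M i) (\<lambda>x. 1 + c * X i x)" using intX[OF i] by auto
      show "AE x in M i. 0 \<le> 1 + c * X i x"
        using bnd[OF i]
      proof (elim eventually_mono)
        fix x assume "0 \<le> X i x \<and> X i x \<le> a"
        hence "exp (\<theta> * X i x) \<le> 1 + c * X i x" using cvx[of "X i x" \<theta>] by (auto simp: c_def field_simps)
        thus "0 \<le> 1 + c * X i x" by (smt (verit) exp_gt_zero)
      qed
    qed
    also have "integral\<^sup>L (M i) (\<lambda>x. 1 + c * X i x) = 1 + c * E i"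
      using intX[OF i] by (simp add: E_def M.prob_space)
    also have "ennreal (1 + c * E i) \<le> ennreal (exp (c * E i))"
      by (intro ennreal_leI) simp
    finally show "(\<integral>\<^sup>+x. ennreal (exp (\<theta> * X i x)) \<partial>M i) \<le> ennreal (exp (c * E i))" .
  qed
  let ?A = "{\<omega> \<in> space (PiM I M). \<theta> * ((\<Sum>i\<in>I. X i (\<omega> i)) - (\<Sum>i\<in>I. E i)) \<ge> lam}"
  have "emeasure (PiM I M) ?A = (\<integral>\<^sup>+\<omega>. indicator ?A \<omega> \<partial>PiM I M)"
  proof (rule nn_integral_indicator[symmetric])
    show "?A \<in> sets (PiM I M)" using meas by measurable
  qed
  also have "\<dots> \<le> (\<integral>\<^sup>+\<omega>. ennreal C * (\<Prod>i\<in>I. ennreal (exp (\<theta> * X i (\<omega> i)))) \<partial>PiM I M)"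
  proof (intro nn_integral_mono)
    fix \<omega> assume "\<omega> \<in> space (PiM I M)"
    have "(\<Prod>i\<in>I. ennreal (exp (\<theta> * X i (\<omega> i)))) = ennreal (\<Prod>i\<in>I. exp (\<theta> * X i (\<omega> i)))"
      by (rule prod_ennreal) simp
    also have "(\<Prod>i\<in>I. exp (\<theta> * X i (\<omega> i))) = exp (\<theta> * (\<Sum>i\<in>I. X i (\<omega> i)))"
      using fin by (simp add: exp_sum sum_distrib_left)
    finally have p: "(\<Prod>i\<in>I. ennreal (exp (\<theta> * X i (\<omega> i)))) = ennreal (exp (\<theta> * (\<Sum>i\<in>I. X i (\<omega> i))))" .
    have "C * exp (\<theta> * (\<Sum>i\<in>I. X i (\<omega> i))) = exp (\<theta> * ((\<Sum>i\<in>I. X i (\<omega> i)) - (\<Sum>i\<in>I. E i)) - lam)"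
      by (simp add: C_def exp_add[symmetric] algebra_simps)
    moreover have "\<omega> \<in> ?A \<Longrightarrow> 1 \<le> exp (\<theta> * ((\<Sum>i\<in>I. X i (\<omega> i)) - (\<Sum>i\<in>I. E i)) - lam)" by auto
    ultimately show "indicator ?A \<omega> \<le> ennreal C * (\<Prod>i\<in>I. ennreal (exp (\<theta> * X i (\<omega> i))))"
      by (auto simp: p indicator_def ennreal_mult[symmetric] C_def intro!: ennreal_leI)
  qed
  also have "\<dots> = ennreal C * (\<integral>\<^sup>+\<omega>. (\<Prod>i\<in>I. ennreal (exp (\<theta> * X i (\<omega> i)))) \<partial>PiM I M)"
    by (rule nn_integral_cmult) (use meas in measurable)
  also have "\<dots> \<le> ennreal C * ennreal (exp (c * (\<Sum>i\<in>I. E i)))"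
  proof (rule mult_left_mono)
    have "(\<integral>\<^sup>+\<omega>. (\<Prod>i\<in>I. ennreal (exp (\<theta> * X i (\<omega> i)))) \<partial>PiM I M)
      = (\<Prod>i\<in>I. \<integral>\<^sup>+x. ennreal (exp (\<theta> * X i x)) \<partial>M i)"
      by (rule product_nn_integral_prod[OF fin]) (use meas in measurable)
    also have "\<dots> \<le> (\<Prod>i\<in>I. ennreal (exp (c * E i)))"
      by (intro prod_mono_ennreal) (auto intro!: step1)
    also have "\<dots> = ennreal (exp (c * (\<Sum>i\<in>I. E i)))"
      by (subst prod_ennreal) (auto simp: exp_sum[OF fin, symmetric] sum_distrib_left)
    finally show "(\<integral>\<^sup>+\<omega>. (\<Prod>i\<in>I. ennreal (exp (\<theta> * X i (\<omega> i)))) \<partial>PiM I M) \<le> ennreal (exp (c * (\<Sum>i\<in>I. E i)))" .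
  qed simp
  also have "ennreal C * ennreal (exp (c * (\<Sum>i\<in>I. E i))) = ennreal (exp ((c - \<theta>) * (\<Sum>i\<in>I. E i) - lam))"
    by (simp add: C_def ennreal_mult[symmetric] exp_add[symmetric] algebra_simps)
  also have "\<dots> \<le> ennreal (exp (\<theta>\<^sup>2 * a * (\<Sum>i\<in>I. w i) - lam))"
  proof (intro ennreal_leI exp_mono diff_right_mono)
    have cth: "0 \<le> c - \<theta>" "c - \<theta> \<le> \<theta>\<^sup>2 * a"
    proof -
      have "c - \<theta> = (exp (\<theta> * a) - 1 - \<theta> * a) / a" using a by (simp add: c_def field_simps)
      moreover have "0 \<le> exp (\<theta> * a) - 1 - \<theta> * a" using exp_ge_add_one_self[of "\<theta>*a"] by linarith
      moreover have "exp (\<theta> * a) - 1 - \<theta> * a \<le> (\<theta> * a)\<^sup>2" using quad[OF th] by linarith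
      moreover have "(\<theta> * a)\<^sup>2 / a = \<theta>\<^sup>2 * a" using a by (simp add: power2_eq_square)
      ultimately show "0 \<le> c - \<theta>" "c - \<theta> \<le> \<theta>\<^sup>2 * a" using a
        by (simp_all add: divide_right_mono)
        (metis divide_right_mono less_eq_real_def)
    qed
    have "(c - \<theta>) * (\<Sum>i\<in>I. E i) = (\<Sum>i\<in>I. (c - \<theta>) * E i)" by (simp add: sum_distrib_left)
    also have "\<dots> \<le> (\<Sum>i\<in>I. \<theta>\<^sup>2 * a * w i)"
    proof (intro sum_mono)
      fix i assume i: "i \<in> I"
      have "(c - \<theta>) * E i \<le> (c - \<theta>) * w i" using Ew[OF i] cth by (intro mult_left_mono) (auto simp: E_def)
      also have "\<dots> \<le> \<theta>\<^sup>2 * a * w i" using cth E0[OF i] Ew[OF i] by (intro mult_right_mono) (auto simp: E_def)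
      finally show "(c - \<theta>) * E i \<le> \<theta>\<^sup>2 * a * w i" .
    qed
    also have "\<dots> = \<theta>\<^sup>2 * a * (\<Sum>i\<in>I. w i)" by (simp add: sum_distrib_left)
    finally show "(c - \<theta>) * (\<Sum>i\<in>I. E i) \<le> \<theta>\<^sup>2 * a * (\<Sum>i\<in>I. w i)" .
  qed
  finally show ?thesis by (simp add: E_def)
qed




lemma pmf_kernel_meas:
  assumes "\<And>x. subprob_space (N x) \<and> sets (N x) = sets B"
  shows "N \<in> measurable (measure_pmf p) (subprob_algebra B)"
  using assms by (auto simp: space_subprob_algebra)

locale armctx =
  fixes q :: "'p::finite pmf" and P :: "nat \<Rightarrow> 'p \<Rightarrow> 'v::finite pmf" and Yk :: "'v \<Rightarrow> 'p \<Rightarrow> real measure"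
  assumes Yk: "\<And>v p. prob_space (Yk v p) \<and> sets (Yk v p) = sets borel \<and> (AE y in Yk v p. 0 \<le> y \<and> y \<le> 1)"
begin

abbreviation "BB \<equiv> (borel \<Otimes>\<^sub>M count_space UNIV :: (real \<times> ('v \<times> 'p)) measure)"

definition K2 :: "nat \<Rightarrow> 'p \<Rightarrow> 'v \<Rightarrow> (real \<times> ('v \<times> 'p)) measure" where
  "K2 j p v = distr (Yk v p) BB (\<lambda>y. (y, (v, p)))"
definition K1 :: "nat \<Rightarrow> 'p \<Rightarrow> (real \<times> ('v \<times> 'p)) measure" where
  "K1 j p = measure_pmf (P j p) \<bind> K2 j p"

lemma Yk_prob: "prob_space (Yk v p)" using Yk by auto
lemma Yk_sets[measurable_cong]: "sets (Yk v p) = sets borel" using Yk by auto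

lemma meas_pair: "(\<lambda>y. (y, (v, p))) \<in> measurable (Yk v p) BB"
  by (simp add: measurable_cong_sets[OF Yk_sets refl])

lemma K2_prob: "prob_space (K2 j p v)" and K2_sets: "sets (K2 j p v) = sets BB"
  unfolding K2_def using prob_space.prob_space_distr[OF Yk_prob meas_pair] by auto

lemma K2_meas: "K2 j p \<in> measurable (measure_pmf (P j p)) (subprob_algebra BB)"
  by (rule pmf_kernel_meas) (simp add: K2_sets prob_space_imp_subprob_space[OF K2_prob])

lemma K1_prob: "prob_space (K1 j p)" and K1_sets: "sets (K1 j p) = sets BB"
proof -
  show "prob_space (K1 j p)" unfolding K1_def
    by (rule prob_space.prob_space_bind[OF prob_space_measure_pmf _ K2_meas]) (simp add: K2_prob)
  show "sets (K1 j p) = sets BB" unfolding K1_def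
    by (rule sets_bind[where N=BB]) (auto simp: K2_sets)
qed

lemma K1_meas: "K1 j \<in> measurable (measure_pmf q) (subprob_algebra BB)"
  by (rule pmf_kernel_meas) (simp add: K1_sets prob_space_imp_subprob_space[OF K1_prob])

lemma arm_law_eq: "arm_law q P Yk j = measure_pmf q \<bind> K1 j"
  unfolding arm_law_def K1_def K2_def ..

lemma arm_prob: "prob_space (arm_law q P Yk j)" and arm_sets: "sets (arm_law q P Yk j) = sets BB"
proof -
  show "prob_space (arm_law q P Yk j)" unfolding arm_law_eq
    by (rule prob_space.prob_space_bind[OF prob_space_measure_pmf _ K1_meas]) (simp add: K1_prob)
  show "sets (arm_law q P Yk j) = sets BB" unfolding arm_law_eq
    by (rule sets_bind[where N=BB]) (auto simp: K1_sets)
qed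

lemma pmf_nn_sum: "(\<integral>\<^sup>+x. f x \<partial>measure_pmf (p :: 'b::finite pmf)) = (\<Sum>x\<in>UNIV. ennreal (pmf p x) * f x)"
  by (simp add: nn_integral_measure_pmf nn_integral_count_space_finite)

lemma arm_nn:
  assumes f: "f \<in> borel_measurable BB"
  shows "(\<integral>\<^sup>+x. f x \<partial>arm_law q P Yk j) =
    (\<Sum>p\<in>UNIV. ennreal (pmf q p) * (\<Sum>v\<in>UNIV. ennreal (pmf (P j p) v) * (\<integral>\<^sup>+y. f (y, (v, p)) \<partial>Yk v p)))"
proof -
  have "(\<integral>\<^sup>+x. f x \<partial>arm_law q P Yk j) = (\<integral>\<^sup>+p. \<integral>\<^sup>+x. f x \<partial>K1 j p \<partial>measure_pmf q)"
    unfolding arm_law_eq by (rule nn_integral_bind[OF f K1_meas])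
  also have "\<dots> = (\<integral>\<^sup>+p. \<integral>\<^sup>+v. \<integral>\<^sup>+x. f x \<partial>K2 j p v \<partial>measure_pmf (P j p) \<partial>measure_pmf q)"
    unfolding K1_def by (subst nn_integral_bind[OF f K2_meas]) simp
  also have "\<dots> = (\<integral>\<^sup>+p. \<integral>\<^sup>+v. \<integral>\<^sup>+y. f (y, (v, p)) \<partial>Yk v p \<partial>measure_pmf (P j p) \<partial>measure_pmf q)"
    unfolding K2_def by (subst nn_integral_distr[OF meas_pair]) (use f in auto)
  also have "\<dots> = (\<Sum>p\<in>UNIV. ennreal (pmf q p) * (\<Sum>v\<in>UNIV. ennreal (pmf (P j p) v) * (\<integral>\<^sup>+y. f (y, (v, p)) \<partial>Yk v p)))"
    by (simp add: pmf_nn_sum)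
  finally show ?thesis .
qed

definition mY :: "'v \<Rightarrow> 'p \<Rightarrow> real" where "mY v p = integral\<^sup>L (Yk v p) (\<lambda>y. y)"

lemma Yk_int: "integrable (Yk v p) (\<lambda>y. y)"
proof -
  interpret prob_space "Yk v p" by (rule Yk_prob)
  show ?thesis
  proof (rule integrable_const_bound[where B=1])
    have ae: "AE y in Yk v p. 0 \<le> y \<and> y \<le> 1" using Yk by auto
    show "AE x in Yk v p. norm x \<le> 1" using ae by (rule eventually_mono) auto
  qed (simp add: measurable_cong_sets[OF Yk_sets refl])
qed

lemma mY_bounds: "0 \<le> mY v p" "mY v p \<le> 1"
proof -
  interpret prob_space "Yk v p" by (rule Yk_prob)
  have ae: "AE y in Yk v p. 0 \<le> y \<and> y \<le> 1" using Yk by auto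
  show "0 \<le> mY v p" unfolding mY_def using ae by (intro integral_nonneg_AE) (auto elim!: eventually_mono)
  have "mY v p \<le> integral\<^sup>L (Yk v p) (\<lambda>y. 1)" unfolding mY_def
    using ae by (intro integral_mono_AE Yk_int) (auto elim!: eventually_mono)
  thus "mY v p \<le> 1" by (simp add: prob_space)
qed

lemma Yk_nn: assumes "0 \<le> c" shows "(\<integral>\<^sup>+y. ennreal (y * c) \<partial>Yk v p) = ennreal (mY v p * c)"
proof -
  have ae: "AE y in Yk v p. 0 \<le> y \<and> y \<le> 1" using Yk by auto
  have "(\<integral>\<^sup>+y. ennreal (y * c) \<partial>Yk v p) = ennreal (integral\<^sup>L (Yk v p) (\<lambda>y. y * c))"
    using ae assms by (intro nn_integral_eq_integral) (auto intro: Yk_int elim!: eventually_mono)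
  thus ?thesis by (simp add: mY_def)
qed

lemma arm_AE01: "AE x in arm_law q P Yk j. 0 \<le> fst x \<and> fst x \<le> 1"
proof -
  have pr: "Measurable.pred BB (\<lambda>x. 0 \<le> fst x \<and> fst x \<le> 1)" by measurable
  show ?thesis unfolding arm_law_eq
  proof (subst AE_bind[OF K1_meas pr], rule AE_I2)
    fix p assume "p \<in> space (measure_pmf q)"
    show "AE x in K1 j p. 0 \<le> fst x \<and> fst x \<le> 1" unfolding K1_def
    proof (subst AE_bind[OF K2_meas pr], rule AE_I2)
      fix v assume "v \<in> space (measure_pmf (P j p))"
      show "AE x in K2 j p v. 0 \<le> fst x \<and> fst x \<le> 1" unfolding K2_def
        using Yk[of v p] by (subst AE_distr_iff[OF meas_pair]) auto
    qed
  qed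
qed

lemma arm_int:
  fixes g :: "'v \<times> 'p \<Rightarrow> real"
  assumes g: "\<And>z. 0 \<le> g z"
  shows "integrable (arm_law q P Yk j) (\<lambda>x. fst x * g (snd x))"
    and "integral\<^sup>L (arm_law q P Yk j) (\<lambda>x. fst x * g (snd x)) =
      (\<Sum>p\<in>UNIV. pmf q p * (\<Sum>v\<in>UNIV. pmf (P j p) v * (mY v p * g (v, p))))"
proof -
  interpret prob_space "arm_law q P Yk j" by (rule arm_prob)
  have meas: "(\<lambda>x. fst x * g (snd x)) \<in> borel_measurable (arm_law q P Yk j)"
    by (simp add: measurable_cong_sets[OF arm_sets refl])
  define G where "G = Max (range g)"
  have gG: "g z \<le> G" for z unfolding G_def by (rule Max_ge) auto
  show int: "integrable (arm_law q P Yk j) (\<lambda>x. fst x * g (snd x))"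
  proof (rule integrable_const_bound[where B=G])
    show "AE x in arm_law q P Yk j. norm (fst x * g (snd x)) \<le> G"
      using arm_AE01
    proof (rule eventually_mono)
      fix x :: "real \<times> ('v \<times> 'p)" assume "0 \<le> fst x \<and> fst x \<le> 1"
      thus "norm (fst x * g (snd x)) \<le> G" using g[of "snd x"] gG[of "snd x"]
        by (auto simp: abs_mult intro: order_trans[OF mult_left_le_one_le])
    qed
  qed (rule meas)
  have "integral\<^sup>L (arm_law q P Yk j) (\<lambda>x. fst x * g (snd x)) =
      enn2real (\<integral>\<^sup>+x. ennreal (fst x * g (snd x)) \<partial>arm_law q P Yk j)"
  proof (intro integral_eq_nn_integral meas)
    show "AE x in arm_law q P Yk j. 0 \<le> fst x * g (snd x)" using arm_AE01[of j]
      by (rule eventually_mono) (use g in auto)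
  qed
  also have "(\<integral>\<^sup>+x. ennreal (fst x * g (snd x)) \<partial>arm_law q P Yk j) =
      (\<Sum>p\<in>UNIV. ennreal (pmf q p) * (\<Sum>v\<in>UNIV. ennreal (pmf (P j p) v) * ennreal (mY v p * g (v, p))))"
    by (subst arm_nn) (auto simp: Yk_nn g)
  also have "\<dots> = ennreal (\<Sum>p\<in>UNIV. pmf q p * (\<Sum>v\<in>UNIV. pmf (P j p) v * (mY v p * g (v, p))))"
    using g mY_bounds by (simp add: ennreal_mult[symmetric] sum_nonneg mult_nonneg_nonneg)
  finally show "integral\<^sup>L (arm_law q P Yk j) (\<lambda>x. fst x * g (snd x)) =
      (\<Sum>p\<in>UNIV. pmf q p * (\<Sum>v\<in>UNIV. pmf (P j p) v * (mY v p * g (v, p))))"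
    using g mY_bounds by (simp add: sum_nonneg mult_nonneg_nonneg)
qed

end



lemma f1_lower: assumes "0 \<le> x" shows "2 * (x - 1) \<le> f1 x"
proof -
  have "x \<le> exp (x - 1)" using exp_ge_add_one_self[of "x - 1"] by simp
  hence "x * x \<le> x * exp (x - 1)" using assms by (intro mult_left_mono) auto
  moreover have "2 * x - 1 \<le> x * x" using zero_le_power2[of "x - 1"] by (simp add: power2_eq_square algebra_simps)
  ultimately show ?thesis unfolding f1_def by simp
qed

locale absc =
  fixes q :: "'p::finite pmf" and P :: "nat \<Rightarrow> 'p \<Rightarrow> 'v::finite pmf" and k j :: nat
  assumes ac: "\<And>p v. p \<in> set_pmf q \<Longrightarrow> (pmf (P k p) v > 0 \<longleftrightarrow> pmf (P j p) v > 0)"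
begin

definition rr :: "'v \<Rightarrow> 'p \<Rightarrow> real" where "rr v p = pmf (P k p) v / pmf (P j p) v"

lemma rr_nonneg: "0 \<le> rr v p" by (simp add: rr_def)

lemma Pj_rr: "pmf (P j p) v * rr v p \<le> pmf (P k p) v"
  by (cases "pmf (P j p) v = 0") (auto simp: rr_def)

lemma Pj_rr_eq: assumes "p \<in> set_pmf q" shows "pmf (P j p) v * rr v p = pmf (P k p) v"
proof (cases "pmf (P j p) v = 0")
  case True thus ?thesis using ac[OF assms, of v] by (simp add: rr_def) (metis pmf_nonneg order_le_less)
qed (simp add: rr_def)

lemma q_zero: "p \<notin> set_pmf q \<Longrightarrow> pmf q p = 0" by (simp add: set_pmf_eq)

lemma Df1_eq: "Df1 q P k j = (\<Sum>p\<in>UNIV. pmf q p * (\<Sum>v\<in>UNIV. pmf (P j p) v * f1 (rr v p)))"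
  by (simp add: Df1_def rr_def)

lemma Df1_nonneg: "0 \<le> Df1 q P k j"
  unfolding Df1_eq
proof (intro sum_nonneg)
  fix p
  show "0 \<le> pmf q p * (\<Sum>v\<in>UNIV. pmf (P j p) v * f1 (rr v p))"
  proof (cases "p \<in> set_pmf q")
    case False thus ?thesis by (simp add: q_zero)
  next
    case True
    have "(\<Sum>v\<in>UNIV. pmf (P j p) v * (2 * (rr v p - 1))) \<le> (\<Sum>v\<in>UNIV. pmf (P j p) v * f1 (rr v p))"
      by (intro sum_mono mult_left_mono f1_lower rr_nonneg) auto
    moreover have "(\<Sum>v\<in>UNIV. pmf (P j p) v * (2 * (rr v p - 1))) =
        2 * ((\<Sum>v\<in>UNIV. pmf (P j p) v * rr v p) - (\<Sum>v\<in>UNIV. pmf (P j p) v))"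
      by (simp add: algebra_simps sum_distrib_left sum_subtractf)
    moreover have "(\<Sum>v\<in>UNIV. pmf (P j p) v * rr v p) = 1"
      using Pj_rr_eq[OF True] by (simp add: sum_pmf_eq_1)
    moreover have "(\<Sum>v\<in>UNIV. pmf (P j p) v) = 1" by (simp add: sum_pmf_eq_1)
    ultimately show ?thesis by simp
  qed
qed

lemma M_ge1: "1 \<le> Mdiv q P k j"
  using Df1_nonneg by (simp add: Mdiv_def)

lemma exp_M: "exp (Mdiv q P k j - 1) = 1 + Df1 q P k j"
  using Df1_nonneg by (simp add: Mdiv_def)

lemma sum_rexp: "(\<Sum>p\<in>UNIV. pmf q p * (\<Sum>v\<in>UNIV. pmf (P j p) v * (rr v p * exp (rr v p - 1)))) = 1 + Df1 q P k j"
proof -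
  have "(\<Sum>p\<in>UNIV. pmf q p * (\<Sum>v\<in>UNIV. pmf (P j p) v * (rr v p * exp (rr v p - 1))))
     = (\<Sum>p\<in>UNIV. pmf q p * (\<Sum>v\<in>UNIV. pmf (P j p) v * f1 (rr v p)) + pmf q p * (\<Sum>v\<in>UNIV. pmf (P j p) v))"
    by (intro sum.cong refl) (simp add: f1_def algebra_simps sum.distrib sum_subtractf sum_distrib_left)
  also have "\<dots> = Df1 q P k j + 1"
    by (simp add: sum.distrib Df1_eq sum_pmf_eq_1)
  finally show ?thesis by simp
qed

lemma bias_bounds:
  fixes m :: "'v \<Rightarrow> 'p \<Rightarrow> real" and a :: real
  assumes m: "\<And>v p. 0 \<le> m v p" "\<And>v p. m v p \<le> 1" and a: "1 \<le> a"
  defines "c \<equiv> a * Mdiv q P k j"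
  defines "ind \<equiv> (\<lambda>v p. if rr v p \<le> c then 1 else (0::real))"
  defines "mu \<equiv> (\<Sum>p\<in>UNIV. pmf q p * (\<Sum>v\<in>UNIV. pmf (P k p) v * m v p))"
  defines "EW \<equiv> (\<Sum>p\<in>UNIV. pmf q p * (\<Sum>v\<in>UNIV. pmf (P j p) v * (m v p * (rr v p * ind v p))))"
  shows "EW \<le> 1" "EW \<le> mu" "mu - EW \<le> exp (1 - a)"
proof -
  have ind01: "0 \<le> ind v p" "ind v p \<le> 1" for v p by (auto simp: ind_def)
  have t1: "pmf (P j p) v * (m v p * (rr v p * ind v p)) \<le> pmf (P k p) v * m v p" for v p
  proof -
    have "pmf (P j p) v * (m v p * (rr v p * ind v p)) = (pmf (P j p) v * rr v p) * (m v p * ind v p)"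
      by (simp add: algebra_simps)
    also have "\<dots> \<le> pmf (P k p) v * (m v p * ind v p)"
      using Pj_rr m ind01 by (intro mult_right_mono) auto
    also have "\<dots> \<le> pmf (P k p) v * m v p"
      using m ind01 by (intro mult_left_mono) (auto intro: mult_right_le_one_le)
    finally show ?thesis .
  qed
  show "EW \<le> mu" unfolding EW_def mu_def
    by (intro sum_mono mult_left_mono t1) auto
  also have "mu \<le> (\<Sum>p\<in>UNIV. pmf q p * (\<Sum>v\<in>UNIV. pmf (P k p) v))" unfolding mu_def
    using m by (intro sum_mono mult_left_mono) (auto intro: mult_right_le_one_le)
  also have "\<dots> = 1" by (simp add: sum_pmf_eq_1)
  finally show "EW \<le> 1" .
  have M1: "1 \<le> Mdiv q P k j" by (rule M_ge1)
  have t2: "pmf q p * (pmf (P k p) v * m v p) - pmf q p * (pmf (P j p) v * (m v p * (rr v p * ind v p)))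
      \<le> exp (1 - c) * (pmf q p * (pmf (P j p) v * (rr v p * exp (rr v p - 1))))" for v p
  proof (cases "p \<in> set_pmf q")
    case False thus ?thesis by (simp add: q_zero)
  next
    case True
    have "pmf q p * (pmf (P k p) v * m v p) - pmf q p * (pmf (P j p) v * (m v p * (rr v p * ind v p)))
        = pmf q p * (pmf (P j p) v * (m v p * (rr v p * (1 - ind v p))))"
      using Pj_rr_eq[OF True, of v] by (simp add: algebra_simps)
    also have "\<dots> \<le> pmf q p * (pmf (P j p) v * (rr v p * exp (rr v p - c)))"
    proof (intro mult_left_mono)
      show "m v p * (rr v p * (1 - ind v p)) \<le> rr v p * exp (rr v p - c)"
      proof (cases "rr v p \<le> c")
        case True thus ?thesis by (simp add: ind_def rr_nonneg)
      next
        case False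
        hence "1 \<le> exp (rr v p - c)" by simp
        hence "rr v p \<le> rr v p * exp (rr v p - c)" using rr_nonneg[of v p]
          by (metis mult.right_neutral mult_left_mono)
        moreover have "m v p * (rr v p * (1 - ind v p)) \<le> rr v p"
          using False m[of v p] rr_nonneg[of v p] by (simp add: ind_def mult_left_le_one_le)
        ultimately show ?thesis by linarith
      qed
    qed auto
    also have "\<dots> = exp (1 - c) * (pmf q p * (pmf (P j p) v * (rr v p * exp (rr v p - 1))))"
      by (simp add: exp_add[symmetric] algebra_simps)
    finally show ?thesis .
  qed
  have "mu - EW = (\<Sum>p\<in>UNIV. \<Sum>v\<in>UNIV. pmf q p * (pmf (P k p) v * m v p) - pmf q p * (pmf (P j p) v * (m v p * (rr v p * ind v p))))"
    by (simp add: mu_def EW_def sum_subtractf sum_distrib_left)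
  also have "\<dots> \<le> (\<Sum>p\<in>UNIV. \<Sum>v\<in>UNIV. exp (1 - c) * (pmf q p * (pmf (P j p) v * (rr v p * exp (rr v p - 1)))))"
    by (intro sum_mono t2)
  also have "\<dots> = exp (1 - c) * (1 + Df1 q P k j)"
    by (simp add: sum_distrib_left[symmetric] sum_rexp)
  also have "\<dots> = exp (Mdiv q P k j - c)"
    by (simp add: exp_M[symmetric] exp_add[symmetric])
  also have "\<dots> \<le> exp (1 - a)"
  proof -
    have "Mdiv q P k j - c = Mdiv q P k j * (1 - a)" by (simp add: c_def algebra_simps)
    also have "\<dots> \<le> 1 * (1 - a)" using M1 a by (intro mult_right_mono_neg) auto
    finally show ?thesis by simp
  qed
  finally show "mu - EW \<le> exp (1 - a)" .
qed

end




lemma ln2_le: "ln (2::real) \<le> 3/4"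
proof -
  have "(1 + 3/32::real)^8 \<le> exp (3/32) ^ 8" by (rule power_mono[OF exp_ge_add_one_self]) auto
  also have "exp (3/32::real) ^ 8 = exp (3/4)" by (simp add: exp_of_nat_mult[symmetric])
  moreover have "(2::real) \<le> (1 + 3/32)^8" by (simp add: power_numeral_reduce)
  ultimately have "2 \<le> exp (3/4::real)" by linarith
  thus ?thesis by (metis exp_gt_zero ln_exp ln_le_cancel_iff zero_less_numeral)
qed

lemma cube_bound: fixes l :: real assumes "5 \<le> l" shows "5/2 * l\<^sup>2 \<le> (l - 1)^3"
proof -
  have "4/5 * l \<le> l - 1" using assms by simp
  hence "(4/5 * l)^3 \<le> (l - 1)^3" using assms by (intro power_mono) auto
  moreover have "5/2 * l\<^sup>2 \<le> (4/5 * l)^3"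
  proof -
    have "(4/5 * l)^3 = 64/125 * l * l\<^sup>2" by (simp add: power2_eq_square power3_eq_cube)
    moreover have "5/2 * l\<^sup>2 \<le> 64/125 * l * l\<^sup>2" using assms by (intro mult_right_mono) auto
    ultimately show ?thesis by simp
  qed
  ultimately show ?thesis by linarith
qed

lemma key_arith:
  fixes l :: nat and D L :: real
  assumes l: "1 \<le> l" and D: "10 \<le> D" "2^(l-1) \<le> D" and L3: "3 \<le> L" and Ll: "real l - 1 \<le> L"
  shows "4 * ln 2 * (real l)\<^sup>2 * (2^l)\<^sup>2 \<le> (5/2 - exp 1 / 2^l)\<^sup>2 * L^3 * D\<^sup>2"
proof -
  have e: "exp 1 < (272/100::real)" by (rule e_less_272)
  have ln2: "ln (2::real) \<le> 3/4" by (rule ln2_le)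
  have L27: "27 \<le> L^3" using power_mono[OF L3, of 3] by simp
  have L0: "0 \<le> L" using L3 by simp
  have D100: "100 \<le> D\<^sup>2" using power_mono[OF D(1), of 2] by simp
  show ?thesis
  proof (cases "l \<le> 4")
    case True
    hence "l = 1 \<or> l = 2 \<or> l = 3 \<or> l = 4" using l by auto
    have LD: "27 * 100 \<le> L^3 * D\<^sup>2" using L27 D100 L0 by (intro mult_mono) auto
    define C :: real where "C = 5/2 - exp 1 / 2^l"
    have main: "3 * (real l)\<^sup>2 * (2^l)\<^sup>2 \<le> C\<^sup>2 * (27*100)"
    proof -
      { assume "l = 1"
        hence "1 \<le> C" using e by (simp add: C_def)
        hence "1 \<le> C\<^sup>2" using power_mono[of 1 C 2] by simp
        hence ?thesis using \<open>l = 1\<close> by simp }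
      moreover
      { assume "l = 2"
        hence "1 \<le> C" using e by (simp add: C_def)
        hence "1 \<le> C\<^sup>2" using power_mono[of 1 C 2] by simp
        hence ?thesis using \<open>l = 2\<close> by simp }
      moreover
      { assume "l = 3"
        hence "1 \<le> C" using e by (simp add: C_def)
        hence "1 \<le> C\<^sup>2" using power_mono[of 1 C 2] by simp
        hence ?thesis using \<open>l = 3\<close> by simp }
      moreover
      { assume "l = 4"
        hence "23/10 \<le> C" using e by (simp add: C_def)
        hence "(23/10)\<^sup>2 \<le> C\<^sup>2" using power_mono[of "23/10" C 2] by simp
        hence "(23/10)\<^sup>2 * 2700 \<le> C\<^sup>2 * 2700" by (intro mult_right_mono) auto
        hence ?thesis using \<open>l = 4\<close> by (simp add: power2_eq_square) }
      ultimately show ?thesis using True l by linarith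
    qed
    have "4 * ln 2 * (real l)\<^sup>2 * (2^l)\<^sup>2 \<le> 4 * (3/4) * (real l)\<^sup>2 * (2^l)\<^sup>2"
      using ln2 by (intro mult_right_mono) auto
    also have "\<dots> \<le> C\<^sup>2 * (27*100)" using main by linarith
    also have "\<dots> \<le> C\<^sup>2 * (L^3 * D\<^sup>2)" using LD by (intro mult_left_mono) auto
    finally show ?thesis by (simp add: mult.assoc C_def)
  next
    case False
    hence l5: "5 \<le> real l" by simp
    have u: "32 \<le> (2::real)^l"
    proof -
      have "(2::real)^5 \<le> 2^l" using False by (intro power_increasing) auto
      thus ?thesis by simp
    qed
    have c: "12/5 \<le> 5/2 - exp (1::real) / 2^l"
    proof -
      have "exp (1::real) / 2^l \<le> exp 1 / 32" using u by (intro divide_left_mono) auto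
      also have "\<dots> \<le> (272/100) / 32" using e by (intro divide_right_mono) auto
      finally show ?thesis by linarith
    qed
    have c2: "(12/5)\<^sup>2 \<le> (5/2 - exp (1::real) / 2^l)\<^sup>2" by (rule power_mono[OF c]) auto
    have l13: "0 \<le> (real l - 1)^3" using l5 by simp
    have cb: "5/2 * (real l)\<^sup>2 \<le> (real l - 1)^3" by (rule cube_bound[OF l5])
    have L3': "(real l - 1)^3 \<le> L^3" using Ll l5 by (intro power_mono) auto
    have D2: "(2^(l-1))\<^sup>2 \<le> D\<^sup>2" using D(2) by (intro power_mono) auto
    have u2: "(2::real)^l = 2 * 2^(l-1)" using l by (metis power_Suc Suc_diff_1 less_le_trans zero_less_one)
    have "4 * ln 2 * (real l)\<^sup>2 * (2^l)\<^sup>2 \<le> 4 * (3/4) * (real l)\<^sup>2 * (2^l)\<^sup>2"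
      using ln2 by (intro mult_right_mono) auto
    also have "\<dots> = 12 * (real l)\<^sup>2 * (2^(l-1))\<^sup>2"
      by (simp add: u2 power2_eq_square)
    also have "\<dots> \<le> (12/5)\<^sup>2 * (5/2 * (real l)\<^sup>2) * (2^(l-1))\<^sup>2"
      by (intro mult_right_mono) (auto simp: power2_eq_square)
    also have "\<dots> \<le> (5/2 - exp 1 / 2^l)\<^sup>2 * (real l - 1)^3 * D\<^sup>2"
      using c2 cb D2 l13 by (intro mult_mono) (auto simp: mult_nonneg_nonneg)
    also have "\<dots> \<le> (5/2 - exp 1 / 2^l)\<^sup>2 * L^3 * D\<^sup>2"
      using L3' L0 by (intro mult_mono mult_left_mono) auto
    finally show ?thesis .
  qed
qed


lemma expo:
  fixes l :: nat and Dl v Z T h :: real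
  assumes l: "1 \<le> l" and Dl: "0 < Dl" "Dl \<le> 1"
    and lev: "real l - 1 \<le> real_of_int \<lfloor>log 2 (10 / Dl)\<rfloor>"
    and v: "0 < v" "v \<le> 1" and T: "0 < T" and h: "0 < h"
    and Z: "T / (real l * h) * v \<le> Z"
  defines "\<epsilon> \<equiv> (1/2::real) ^ (l - 1)"
  defines "a \<equiv> 2 * ln (2 / \<epsilon>)"
  defines "t \<equiv> 5/4 * \<epsilon> - exp (1 - a)"
  shows "T / (2 * ((log 2 (10 / Dl)) ^ 3 / ((Dl / 10) ^ 2 * v ^ 2)) * h) \<le> t\<^sup>2 * Z / (4 * a)"
    and "1 \<le> a" and "0 < t" and "t \<le> 5/4 * \<epsilon>" and "\<epsilon> \<le> 1"
    and "exp (1 - a) \<le> 5/4 * \<epsilon> - t"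
proof -
  define D where "D = 10 / Dl"
  define L where "L = log 2 D"
  define u :: real where "u = 2 ^ l"
  have D10: "10 \<le> D" using Dl by (simp add: D_def field_simps)
  have L3: "3 \<le> L"
  proof -
    have "log 2 8 \<le> log 2 D" using D10 by (subst log_le_cancel_iff) auto
    moreover have "log 2 (8::real) = 3"
    proof -
      have "(8::real) = 2 ^ 3" by simp
      thus ?thesis by (simp only: log_pow_cancel)
    qed
    ultimately show ?thesis by (simp add: L_def)
  qed
  have Ll: "real l - 1 \<le> L" using lev unfolding L_def D_def by linarith
  have D2: "2^(l-1) \<le> D"
  proof -
    have "(2::real) powr (real l - 1) \<le> 2 powr L" using Ll by (intro powr_mono) auto
    moreover have "(2::real) powr L = D" using D10 by (simp add: L_def)
    moreover have "(2::real) powr (real l - 1) = 2^(l-1)" using l by (simp add: powr_realpow[symmetric] of_nat_diff)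
    ultimately show ?thesis by simp
  qed
  define c where "c = 5/2 - exp 1 / u"
  have key: "4 * ln 2 * (real l)\<^sup>2 * u\<^sup>2 \<le> c\<^sup>2 * L^3 * D\<^sup>2"
    unfolding u_def c_def by (rule key_arith[OF l D10 D2 L3 Ll])
  have u2: "2 \<le> u" unfolding u_def using power_increasing[of 1 l "2::real"] l by simp
  have ul: "u = 2 * 2^(l-1)" unfolding u_def using l by (metis Suc_diff_1 less_le_trans zero_less_one power_Suc)
  have eps: "\<epsilon> = 2 / u"
  proof -
    have "\<epsilon> = 1 / 2^(l-1)" unfolding \<epsilon>_def by (simp add: power_one_over)
    thus ?thesis using ul by simp
  qed
  show "\<epsilon> \<le> 1" unfolding \<epsilon>_def by (simp add: power_le_one)
  have aeq: "a = 2 * real l * ln 2"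
  proof -
    have "2 / \<epsilon> = u" using eps u2 by simp
    thus ?thesis by (simp add: a_def u_def ln_realpow)
  qed
  have ln2: "2/3 \<le> ln (2::real)" by (rule ln2_ge_two_thirds)
  show a1: "1 \<le> a"
  proof -
    have "2 * 1 * (2/3) \<le> 2 * real l * ln 2" using l ln2 by (intro mult_mono) auto
    thus ?thesis using aeq by simp
  qed
  have expa: "exp (1 - a) = exp 1 / u\<^sup>2"
  proof -
    have "exp (1 - a) = exp 1 / exp a" by (simp add: exp_diff)
    moreover have "exp a = u\<^sup>2"
    proof -
      have "a = 2 * ln u" using eps u2 by (simp add: a_def)
      also have "\<dots> = ln (u\<^sup>2)" using u2 by (simp add: ln_realpow)
      finally show ?thesis using u2 by simp
    qed
    ultimately show ?thesis by simp
  qed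
  have teq: "t = c / u"
  proof -
    have "t = 5/4 * (2/u) - exp 1 / u\<^sup>2" by (simp add: t_def eps expa)
    also have "\<dots> = c / u" using u2 by (simp add: c_def power2_eq_square diff_divide_distrib)
    finally show ?thesis .
  qed
  have e: "exp 1 < (272/100::real)" by (rule e_less_272)
  have cpos: "1 \<le> c"
  proof -
    have "exp 1 / u \<le> exp 1 / 2" using u2 by (intro divide_left_mono) auto
    thus ?thesis using e unfolding c_def by linarith
  qed
  show "0 < t" using teq cpos u2 by simp
  show "t \<le> 5/4 * \<epsilon>" unfolding t_def by simp
  show "exp (1 - a) \<le> 5/4 * \<epsilon> - t" unfolding t_def by simp
  have Lp: "0 < L" using L3 by simp
  have Dp: "0 < D" using D10 by simp
  have lpos: "0 < real l" using l by simp
  have Zb: "t\<^sup>2 * (T / (real l * h) * v) / (4 * a) \<le> t\<^sup>2 * Z / (4 * a)"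
    using Z a1 by (intro divide_right_mono mult_left_mono) auto
  have lhs: "T / (2 * ((log 2 (10 / Dl)) ^ 3 / ((Dl / 10) ^ 2 * v ^ 2)) * h) = (T / h) * v\<^sup>2 * (1 / (2 * L^3 * D\<^sup>2))"
  proof -
    have "Dl / 10 = 1 / D" by (simp add: D_def)
    hence "(log 2 (10 / Dl)) ^ 3 / ((Dl / 10) ^ 2 * v ^ 2) = L^3 * D\<^sup>2 / v\<^sup>2"
      using Dl v by (simp add: L_def D_def power_one_over field_simps)
    thus ?thesis by simp
  qed
  have rhs: "t\<^sup>2 * (T / (real l * h) * v) / (4 * a) = (T / h) * v * (c\<^sup>2 / (8 * ln 2 * (real l)\<^sup>2 * u\<^sup>2))"
    using lpos h u2 by (simp add: teq aeq power2_eq_square field_simps)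
  have frac: "1 / (2 * L^3 * D\<^sup>2) \<le> c\<^sup>2 / (8 * ln 2 * (real l)\<^sup>2 * u\<^sup>2)"
  proof -
    have pos1: "0 < 8 * ln 2 * (real l)\<^sup>2 * u\<^sup>2" using lpos u2 by simp
    have pos2: "0 < 2 * L^3 * D\<^sup>2" using Lp Dp by simp
    have "c\<^sup>2 * (2 * L^3 * D\<^sup>2) = 2 * (c\<^sup>2 * L^3 * D\<^sup>2)" by simp
    hence "8 * ln 2 * (real l)\<^sup>2 * u\<^sup>2 \<le> c\<^sup>2 * (2 * L^3 * D\<^sup>2)" using key by linarith
    thus ?thesis using pos1 pos2 by (simp add: field_simps)
  qed
  have "(T / h) * v\<^sup>2 * (1 / (2 * L^3 * D\<^sup>2)) \<le> (T / h) * v * (1 / (2 * L^3 * D\<^sup>2))"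
  proof (intro mult_right_mono mult_left_mono)
    show "v\<^sup>2 \<le> v" using v by (simp add: power2_eq_square mult_le_cancel_left1)
  qed (use T h Lp Dp in auto)
  also have "\<dots> \<le> (T / h) * v * (c\<^sup>2 / (8 * ln 2 * (real l)\<^sup>2 * u\<^sup>2))"
    using frac T h v by (intro mult_left_mono) auto
  finally show "T / (2 * ((log 2 (10 / Dl)) ^ 3 / ((Dl / 10) ^ 2 * v ^ 2)) * h) \<le> t\<^sup>2 * Z / (4 * a)"
    using lhs rhs Zb by linarith
qed




locale sris_ctx =
  fixes K :: nat and q :: "'p::finite pmf" and P :: "nat \<Rightarrow> 'p \<Rightarrow> 'v::finite pmf"
    and Yk :: "'v \<Rightarrow> 'p \<Rightarrow> real measure" and c :: "nat \<Rightarrow> real" and B :: real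
    and nu :: "nat set \<Rightarrow> nat \<Rightarrow> real" and T :: nat and kstar :: nat
  assumes Yk: "\<And>v p. prob_space (Yk v p) \<and> sets (Yk v p) = sets borel \<and> (AE y in Yk v p. 0 \<le> y \<and> y \<le> 1)"
      and abs_cont: "\<And>k j p v. k < K \<Longrightarrow> j < K \<Longrightarrow> p \<in> set_pmf q \<Longrightarrow>
                 (pmf (P k p) v > 0 \<longleftrightarrow> pmf (P j p) v > 0)"
      and feas: "\<exists>\<nu>. feasible K c B \<nu>"
      and nu: "\<And>R. R \<noteq> {} \<Longrightarrow> R \<subseteq> {..<K} \<Longrightarrow> is_alloc_maximizer K (Mdiv q P) c B R (nu R)"
      and Tpos: "0 < T"
      and kstar: "kstar < K" and best: "\<And>k. k < K \<Longrightarrow> k \<noteq> kstar \<Longrightarrow> arm_mean q P Yk k < arm_mean q P Yk kstar"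
begin

sublocale A: armctx q P Yk using Yk by unfold_locales

abbreviation "\<mu> \<equiv> arm_mean q P Yk"
abbreviation "MM \<equiv> Mdiv q P"
definition "\<Delta> k = \<mu> kstar - \<mu> k"
definition "lev k = \<lfloor>log 2 (10 / \<Delta> k)\<rfloor>"
definition "hh = hlog (n_phases T)"
definition "Inv l R \<longleftrightarrow> R \<noteq> {} \<and> R \<subseteq> {..<K} \<and> kstar \<in> R \<and> (\<forall>i\<in>R. i \<noteq> kstar \<longrightarrow> int l \<le> lev i)"

lemma mu_eq: "\<mu> k = (\<Sum>p\<in>UNIV. pmf q p * (\<Sum>v\<in>UNIV. pmf (P k p) v * A.mY v p))"
proof -
  have "\<mu> k = integral\<^sup>L (arm_law q P Yk k) (\<lambda>x. fst x * (\<lambda>z. 1) (snd x))"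
    by (simp add: arm_mean_def)
  also have "\<dots> = (\<Sum>p\<in>UNIV. pmf q p * (\<Sum>v\<in>UNIV. pmf (P k p) v * (A.mY v p * 1)))"
    by (rule A.arm_int(2)) simp
  finally show ?thesis by simp
qed

lemma mu_bounds: "0 \<le> \<mu> k" "\<mu> k \<le> 1"
proof -
  show "0 \<le> \<mu> k" unfolding mu_eq using A.mY_bounds by (intro sum_nonneg mult_nonneg_nonneg) auto
  have "\<mu> k \<le> (\<Sum>p\<in>UNIV. pmf q p * (\<Sum>v\<in>UNIV. pmf (P k p) v * 1))" unfolding mu_eq
    using A.mY_bounds by (intro sum_mono mult_left_mono) auto
  also have "\<dots> = 1" by (simp add: sum_pmf_eq_1)
  finally show "\<mu> k \<le> 1" .
qed

lemma Delta_kstar: "\<Delta> kstar = 0" by (simp add: \<Delta>_def)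

lemma Delta_pos: "k < K \<Longrightarrow> k \<noteq> kstar \<Longrightarrow> 0 < \<Delta> k"
  using best by (simp add: \<Delta>_def)

lemma Delta_le1: "\<Delta> k \<le> 1" using mu_bounds[of kstar] mu_bounds[of k] by (simp add: \<Delta>_def)

lemma Delta_nonneg: "k < K \<Longrightarrow> 0 \<le> \<Delta> k"
  using Delta_pos[of k] Delta_kstar by (cases "k = kstar") auto

lemma absc_inst: "i < K \<Longrightarrow> j < K \<Longrightarrow> absc q P i j"
  by unfold_locales (rule abs_cont)

lemma M_ge1: "i < K \<Longrightarrow> j < K \<Longrightarrow> 1 \<le> MM i j"
  using absc.M_ge1[OF absc_inst] by blast

lemma gap_level_eq: "k < K \<Longrightarrow> k \<noteq> kstar \<Longrightarrow> gap_level (\<Delta> k) = ereal (real_of_int (lev k))"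
  using Delta_pos[of k] by (simp add: gap_level_def lev_def)

lemma lev_ge3: assumes "k < K" "k \<noteq> kstar" shows "3 \<le> lev k"
proof -
  have D: "0 < \<Delta> k" "\<Delta> k \<le> 1" using Delta_pos[OF assms] Delta_le1 by auto
  have "8 \<le> 10 / \<Delta> k" using D by (simp add: field_simps)
  hence "log 2 8 \<le> log 2 (10 / \<Delta> k)" using D by (subst log_le_cancel_iff) auto
  moreover have "log 2 (8::real) = 3"
  proof -
    have "(8::real) = 2 ^ 3" by simp
    thus ?thesis by (simp only: log_pow_cancel)
  qed
  ultimately have "3 \<le> log 2 (10 / \<Delta> k)" by simp
  thus ?thesis unfolding lev_def by linarith
qed

lemma Delta_gt_lev: assumes "k < K" "k \<noteq> kstar" shows "10 / 2 ^ nat (lev k + 1) < \<Delta> k"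
proof -
  have D: "0 < \<Delta> k" using Delta_pos[OF assms] by auto
  have "log 2 (10 / \<Delta> k) < real_of_int (lev k + 1)" unfolding lev_def by linarith
  hence "10 / \<Delta> k < 2 powr (real_of_int (lev k + 1))" using D
    by (subst log_less_iff[symmetric]) auto
  also have "2 powr (real_of_int (lev k + 1)) = 2 ^ nat (lev k + 1)"
    using lev_ge3[OF assms] by (simp add: powr_realpow[symmetric])
  finally show ?thesis using D by (simp add: field_simps)
qed

lemma hh_pos: "0 < hh"
proof -
  have "1 \<le> real T" using Tpos by simp
  hence "10 \<le> 10 * sqrt (real T)" by simp
  hence "log 2 10 \<le> log 2 (10 * sqrt (real T))" by (subst log_le_cancel_iff) auto
  moreover have "0 < log 2 (10::real)" by simp
  ultimately have "1 \<le> n_phases T" unfolding n_phases_def by linarith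
  hence "1 \<in> {1..n_phases T}" by simp
  hence "0 < (\<Sum>i=1..n_phases T. 1 / real i)"
    by (intro sum_pos2[of _ 1]) auto
  thus ?thesis by (simp add: hh_def hlog_def)
qed

end



context sris_ctx begin

lemma alloc_le1:
  assumes R: "finite R" "R \<noteq> {}" "R \<subseteq> {..<K}" and f: "feasible K c B \<nu>"
  shows "alloc_obj K MM R \<nu> \<le> 1"
proof -
  obtain i where i: "i \<in> R" using R by auto
  have "alloc_obj K MM R \<nu> \<le> (\<Sum>j<K. \<nu> j / MM i j)"
    unfolding alloc_obj_def using R i by (intro Min_le) auto
  also have "\<dots> \<le> (\<Sum>j<K. \<nu> j)"
  proof (intro sum_mono)
    fix j assume j: "j \<in> {..<K}"
    have "1 \<le> MM i j" using M_ge1 i R j by auto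
    moreover have "0 \<le> \<nu> j" using f j by (auto simp: feasible_def)
    ultimately show "\<nu> j / MM i j \<le> \<nu> j" by (simp add: divide_le_eq mult_le_cancel_left1 order_trans[of _ "\<nu> j"]
        mult_left_mono[of 1 "MM i j" "\<nu> j", simplified])
  qed
  also have "\<dots> = 1" using f by (simp add: feasible_def)
  finally show ?thesis .
qed

lemma alloc_pos:
  assumes R: "finite R" "R \<noteq> {}" "R \<subseteq> {..<K}" and f: "feasible K c B \<nu>"
  shows "0 < alloc_obj K MM R \<nu>"
  unfolding alloc_obj_def
proof (subst Min_gr_iff)
  show "finite ((\<lambda>k. \<Sum>j<K. \<nu> j / MM k j) ` R)" "(\<lambda>k. \<Sum>j<K. \<nu> j / MM k j) ` R \<noteq> {}" using R by auto
  show "\<forall>a\<in>(\<lambda>k. \<Sum>j<K. \<nu> j / MM k j) ` R. 0 < a"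
  proof
    fix x assume "x \<in> (\<lambda>k. \<Sum>j<K. \<nu> j / MM k j) ` R"
    then obtain i where i: "i \<in> R" and x: "x = (\<Sum>j<K. \<nu> j / MM i j)" by auto
    have nn: "0 \<le> \<nu> j" if "j < K" for j using f that by (auto simp: feasible_def)
    have "\<exists>j\<in>{..<K}. 0 < \<nu> j"
    proof (rule ccontr)
      assume "\<not> ?thesis"
      hence "\<forall>j\<in>{..<K}. \<nu> j = 0" using nn by force
      hence "(\<Sum>j<K. \<nu> j) = 0" by simp
      thus False using f by (simp add: feasible_def)
    qed
    then obtain j0 where j0: "j0 < K" "0 < \<nu> j0" by auto
    have M0: "0 < MM i j" if "j < K" for j using M_ge1[of i j] i R that by auto
    show "0 < x" unfolding x
      by (rule sum_pos2[of _ j0]) (use j0 M0 nn in \<open>auto intro!: divide_nonneg_pos\<close>)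
  qed
qed

lemma vstar_eq: "R \<noteq> {} \<Longrightarrow> R \<subseteq> {..<K} \<Longrightarrow> vstar K MM c B R = alloc_obj K MM R (nu R)"
  and nu_feas: "R \<noteq> {} \<Longrightarrow> R \<subseteq> {..<K} \<Longrightarrow> feasible K c B (nu R)"
  using nu[of R] by (auto simp: is_alloc_maximizer_def)

lemma vstar_ge:
  assumes R: "R \<noteq> {}" "R \<subseteq> {..<K}" and f: "feasible K c B \<nu>"
  shows "alloc_obj K MM R \<nu> \<le> vstar K MM c B R"
  unfolding vstar_def
proof (rule cSUP_upper)
  have fin: "finite R" using R finite_subset by auto
  show "bdd_above (alloc_obj K MM R ` {\<nu>. feasible K c B \<nu>})"
    using alloc_le1[OF fin R] by (intro bdd_aboveI[of _ 1]) auto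
qed (use f in auto)

lemma vstar_mono:
  assumes R: "R \<noteq> {}" "R \<subseteq> R'" "R' \<subseteq> {..<K}"
  shows "vstar K MM c B R' \<le> vstar K MM c B R"
proof -
  have R'ne: "R' \<noteq> {}" using R by auto
  have fin: "finite R'" using R finite_subset by auto
  have "vstar K MM c B R' = alloc_obj K MM R' (nu R')" by (rule vstar_eq[OF R'ne R(3)])
  also have "\<dots> \<le> alloc_obj K MM R (nu R')"
    unfolding alloc_obj_def using R fin by (intro Min_antimono image_mono) (auto intro: finite_subset)
  also have "\<dots> \<le> vstar K MM c B R" using R by (intro vstar_ge nu_feas[OF R'ne R(3)]) auto
  finally show ?thesis .
qed

lemma vstar_pos_le1:
  assumes R: "R \<noteq> {}" "R \<subseteq> {..<K}"
  shows "0 < vstar K MM c B R" "vstar K MM c B R \<le> 1"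
proof -
  have fin: "finite R" using R finite_subset by auto
  show "0 < vstar K MM c B R" "vstar K MM c B R \<le> 1"
    using vstar_eq[OF R] alloc_pos[OF fin R nu_feas[OF R]] alloc_le1[OF fin R nu_feas[OF R]] by auto
qed

lemma elim_inv:
  assumes l: "1 \<le> l" and inv: "Inv (l - 1) R"
    and Y: "\<And>i. i \<in> R \<Longrightarrow> \<bar>Yh i - \<mu> i\<bar> < 5/4 * (1/2)^(l-1)"
  shows "Inv l (eliminate l R Yh)"
proof -
  define g :: real where "g = 5 / 2^l"
  have ul: "(2::real)^l = 2 * 2^(l-1)" using l by (metis Suc_diff_1 less_le_trans zero_less_one power_Suc)
  have geq: "5/4 * (1/2::real)^(l-1) = g/2" unfolding g_def using ul by (simp add: power_one_over)
  have R: "R \<noteq> {}" "R \<subseteq> {..<K}" "kstar \<in> R" and levR: "\<And>i. i \<in> R \<Longrightarrow> i \<noteq> kstar \<Longrightarrow> int (l-1) \<le> lev i"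
    using inv by (auto simp: Inv_def)
  have fin: "finite R" using R finite_subset by auto
  have Y2: "\<bar>Yh i - \<mu> i\<bar> < g/2" if "i \<in> R" for i using Y[OF that] geq by simp
  have muk: "\<mu> i \<le> \<mu> kstar" if "i \<in> R" for i using best[of i] R that by (cases "i = kstar") auto
  have "Max (Yh ` R) \<in> Yh ` R" using fin R by (intro Max_in) auto
  then obtain i0 where i0: "i0 \<in> R" "Max (Yh ` R) = Yh i0" by auto
  have Yst: "kstar \<in> eliminate l R Yh"
  proof -
    have "Yh i0 < Yh kstar + g" using Y2[OF i0(1)] Y2[OF R(3)] muk[OF i0(1)] by linarith
    thus ?thesis using R(3) i0 by (auto simp: eliminate_def g_def)
  qed
  have sub: "eliminate l R Yh \<subseteq> R" by (auto simp: eliminate_def)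
  have "int l \<le> lev i" if "i \<in> eliminate l R Yh" "i \<noteq> kstar" for i
  proof (rule ccontr)
    assume "\<not> int l \<le> lev i"
    hence lv: "lev i + 1 \<le> int l" by simp
    have iR: "i \<in> R" using that sub by auto
    have iK: "i < K" using iR R by auto
    have "(2::real) ^ nat (lev i + 1) \<le> 2 ^ l" using lv lev_ge3[OF iK that(2)] by (intro power_increasing) auto
    hence "10 / 2^l \<le> 10 / (2::real) ^ nat (lev i + 1)" by (intro divide_left_mono) auto
    with Delta_gt_lev[OF iK that(2)] have D: "2 * g < \<Delta> i" by (simp add: g_def)
    have "Yh i + g < Yh kstar" using Y2[OF iR] Y2[OF R(3)] D unfolding \<Delta>_def by linarith
    also have "Yh kstar \<le> Max (Yh ` R)" using fin R(3) by (intro Max_ge) auto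
    finally show False using that(1) by (auto simp: eliminate_def g_def)
  qed
  thus ?thesis using Yst sub R by (auto simp: Inv_def)
qed

end



context sris_ctx begin

lemma Xf_facts:
  assumes ij: "i < K" "j < K" and a: "1 \<le> a"
    and Xdef: "\<And>x. X x = 1 / MM i j * fst x * iw_ratio P i j x * (if iw_ratio P i j x \<le> a * MM i j then 1 else 0)"
  shows "X \<in> borel_measurable (arm_law q P Yk j)"
    and "AE x in arm_law q P Yk j. 0 \<le> X x \<and> X x \<le> a"
    and "integral\<^sup>L (arm_law q P Yk j) X \<le> 1 / MM i j"
    and "0 \<le> \<mu> i - MM i j * integral\<^sup>L (arm_law q P Yk j) X"
    and "\<mu> i - MM i j * integral\<^sup>L (arm_law q P Yk j) X \<le> exp (1 - a)"
proof -
  interpret ab: absc q P i j by (rule absc_inst[OF ij])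
  have M1: "1 \<le> MM i j" by (rule M_ge1[OF ij])
  define ind where "ind = (\<lambda>v p. if ab.rr v p \<le> a * MM i j then 1 else (0::real))"
  define g where "g = (\<lambda>z::'v \<times> 'p. 1 / MM i j * (ab.rr (fst z) (snd z) * ind (fst z) (snd z)))"
  have Xg: "X = (\<lambda>x. fst x * g (snd x))"
    by (rule ext) (simp add: Xdef g_def ind_def iw_ratio_def ab.rr_def)
  have g0: "0 \<le> g z" for z using M1 by (simp add: g_def ind_def ab.rr_nonneg)
  have ga: "g z \<le> a" for z
  proof (cases "ab.rr (fst z) (snd z) \<le> a * MM i j")
    case True
    hence "ab.rr (fst z) (snd z) / MM i j \<le> a" using M1 by (simp add: divide_le_eq)
    thus ?thesis using True by (simp add: g_def ind_def)
  next
    case False thus ?thesis using a by (simp add: g_def ind_def)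
  qed
  show "X \<in> borel_measurable (arm_law q P Yk j)" unfolding Xg
    by (simp add: measurable_cong_sets[OF A.arm_sets refl])
  show "AE x in arm_law q P Yk j. 0 \<le> X x \<and> X x \<le> a"
    using A.arm_AE01[of j]
  proof (rule eventually_mono)
    fix x :: "real \<times> 'v \<times> 'p" assume x: "0 \<le> fst x \<and> fst x \<le> 1"
    have "fst x * g (snd x) \<le> 1 * a" using x g0 ga by (intro mult_mono) auto
    thus "0 \<le> X x \<and> X x \<le> a" using x g0 by (simp add: Xg)
  qed
  define EW where "EW = (\<Sum>p\<in>UNIV. pmf q p * (\<Sum>v\<in>UNIV. pmf (P j p) v * (A.mY v p * (ab.rr v p * ind v p))))"
  have int: "integral\<^sup>L (arm_law q P Yk j) X = EW / MM i j"
  proof -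
    have "integral\<^sup>L (arm_law q P Yk j) X = (\<Sum>p\<in>UNIV. pmf q p * (\<Sum>v\<in>UNIV. pmf (P j p) v * (A.mY v p * g (v, p))))"
      unfolding Xg by (rule A.arm_int(2)[OF g0])
    also have "\<dots> = EW / MM i j"
      by (simp add: EW_def g_def sum_divide_distrib[symmetric] algebra_simps)
    finally show ?thesis .
  qed
  have bb: "EW \<le> 1" "EW \<le> \<mu> i" "\<mu> i - EW \<le> exp (1 - a)"
    using ab.bias_bounds[of A.mY a, OF A.mY_bounds(1) A.mY_bounds(2) a]
    unfolding EW_def ind_def mu_eq by auto
  show "integral\<^sup>L (arm_law q P Yk j) X \<le> 1 / MM i j"
    unfolding int using bb M1 by (intro divide_right_mono) auto
  show "0 \<le> \<mu> i - MM i j * integral\<^sup>L (arm_law q P Yk j) X" unfolding int using bb M1 by simp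
  show "\<mu> i - MM i j * integral\<^sup>L (arm_law q P Yk j) X \<le> exp (1 - a)" unfolding int using bb M1 by simp
qed

end



context sris_ctx begin

definition Xfun :: "real \<Rightarrow> nat \<Rightarrow> nat \<Rightarrow> real \<times> ('v \<times> 'p) \<Rightarrow> real" where
  "Xfun \<epsilon> i j x = 1 / MM i j * fst x * iw_ratio P i j x *
     (if iw_ratio P i j x \<le> 2 * ln (2 / \<epsilon>) * MM i j then 1 else 0)"

lemma sum_I:
  fixes f :: "nat \<times> nat \<Rightarrow> real" and m :: "nat \<Rightarrow> nat"
  shows "(\<Sum>x\<in>{(j, s). j < K \<and> s < m j}. f x) = (\<Sum>j<K. \<Sum>s<m j. f (j, s))"
proof -
  have "{(j, s). j < K \<and> s < m j} = (SIGMA j:{..<K}. {..<m j})" by auto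
  thus ?thesis by (simp add: sum.Sigma)
qed

lemma est_eq:
  "est K MM P m \<epsilon> i \<omega> = (\<Sum>x\<in>{(j, s). j < K \<and> s < m j}. Xfun \<epsilon> i (fst x) (\<omega> x)) / (\<Sum>j<K. real (m j) / MM i j)"
  unfolding est_def Let_def sum_I by (simp add: Xfun_def)

lemma Xfun_meas: "Xfun \<epsilon> i j \<in> borel_measurable (arm_law q P Yk j)"
  unfolding Xfun_def iw_ratio_def by (simp add: measurable_cong_sets[OF A.arm_sets refl])

lemma fin_I: fixes m :: "nat \<Rightarrow> nat" shows "finite {(j, s). j < K \<and> s < m j}"
proof -
  have "{(j, s). j < K \<and> s < m j} = (SIGMA j:{..<K}. {..<m j})" by auto
  thus ?thesis by (auto intro!: finite_SigmaI)
qed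

lemma est_meas:
  fixes m :: "nat \<Rightarrow> nat"
  defines "I \<equiv> {(j, s). j < K \<and> s < m j}"
  shows "(\<lambda>\<omega>. est K MM P m \<epsilon> i \<omega>) \<in> borel_measurable (PiM I (\<lambda>x. arm_law q P Yk (fst x)))"
proof -
  have "(\<lambda>\<omega>. \<Sum>x\<in>I. Xfun \<epsilon> i (fst x) (\<omega> x)) \<in> borel_measurable (PiM I (\<lambda>x. arm_law q P Yk (fst x)))"
  proof (intro borel_measurable_sum)
    fix x assume x: "x \<in> I"
    show "(\<lambda>\<omega>. Xfun \<epsilon> i (fst x) (\<omega> x)) \<in> borel_measurable (PiM I (\<lambda>x. arm_law q P Yk (fst x)))"
      by (rule measurable_compose[OF measurable_component_singleton[OF x] Xfun_meas])
  qed
  thus ?thesis unfolding est_eq I_def by simp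
qed

lemma elim_meas:
  fixes Yh :: "nat \<Rightarrow> 'a \<Rightarrow> real"
  assumes R: "finite R" and Yh: "\<And>k. Yh k \<in> borel_measurable N"
  shows "(\<lambda>\<omega>. eliminate l R (\<lambda>k. Yh k \<omega>)) \<in> measurable N (count_space UNIV)"
proof -
  have cR: "countable (Pow R)" using R by (simp add: countable_finite)
  have "(\<lambda>\<omega>. eliminate l R (\<lambda>k. Yh k \<omega>)) \<in> measurable N (count_space (Pow R))"
    unfolding measurable_count_space_eq_countable[OF cR]
  proof (intro conjI ballI)
    show "(\<lambda>\<omega>. eliminate l R (\<lambda>k. Yh k \<omega>)) \<in> space N \<rightarrow> Pow R" by (auto simp: eliminate_def)
    fix S assume S: "S \<in> Pow R"
    have "(\<lambda>\<omega>. eliminate l R (\<lambda>k. Yh k \<omega>)) -` {S} \<inter> space N =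
        {\<omega> \<in> space N. \<forall>i\<in>R. (i \<in> S) = (\<not> Max ((\<lambda>k. Yh k \<omega>) ` R) > Yh i \<omega> + 5 / 2 ^ l)}"
      using S by (auto simp: eliminate_def)
    also have "\<dots> \<in> sets N" using R Yh by measurable
    finally show "(\<lambda>\<omega>. eliminate l R (\<lambda>k. Yh k \<omega>)) -` {S} \<inter> space N \<in> sets N" .
  qed
  moreover have "(\<lambda>x. x) \<in> measurable (count_space (Pow R)) (count_space (UNIV :: nat set set))" by simp
  ultimately show ?thesis by (rule measurable_compose)
qed

end



context sris_ctx begin

lemma phase_bound:
  assumes l: "1 \<le> l" and inv: "Inv (l - 1) R"
    and k': "k' < K" "k' \<noteq> kstar" "int (l - 1) \<le> lev k'"
    and kmin: "\<And>i. i < K \<Longrightarrow> i \<noteq> kstar \<Longrightarrow> int (l - 1) \<le> lev i \<Longrightarrow> lev k' \<le> lev i"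
  shows "emeasure (sris_phase K q P Yk nu T l R) {R'. \<not> Inv l R'}
     \<le> ennreal (2 * real K * exp (- real T / (2 * Hterm K MM c B \<Delta> k' * hh)))"
proof -
  have R: "R \<noteq> {}" "R \<subseteq> {..<K}" "kstar \<in> R" using inv by (auto simp: Inv_def)
  have levR: "\<And>i. i \<in> R \<Longrightarrow> i \<noteq> kstar \<Longrightarrow> int (l - 1) \<le> lev i" using inv by (auto simp: Inv_def)
  have finR: "finite R" using R finite_subset by auto
  define Ebound where "Ebound = exp (- real T / (2 * Hterm K MM c B \<Delta> k' * hh))"
  have Eb0: "0 \<le> Ebound" by (simp add: Ebound_def)
  show ?thesis
  proof (cases "card R \<le> 1")
    case True
    have "R = {kstar}"
    proof -
      have "0 < card R" using finR R(1) by (simp add: card_gt_0_iff)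
      hence "card R = 1" using True by linarith
      then obtain x where "R = {x}" by (auto simp: card_Suc_eq)
      thus ?thesis using R by auto
    qed
    moreover have "Inv l {kstar}" using kstar by (auto simp: Inv_def)
    moreover have "sris_phase K q P Yk nu T l R = return (count_space UNIV) R"
      unfolding sris_phase_def by (rule if_P[OF True])
    ultimately have "emeasure (sris_phase K q P Yk nu T l R) {R'. \<not> Inv l R'} = 0"
      by simp
    thus ?thesis by simp
  next
    case False
    define \<nu> where "\<nu> = nu R"
    define m where "m = pulls \<nu> T l"
    define I where "I = {(j, s). j < K \<and> s < m j}"
    define MS where "MS = (\<lambda>x::nat \<times> nat. arm_law q P Yk (fst x))"
    define \<Omega> where "\<Omega> = PiM I MS"
    define \<epsilon> :: real where "\<epsilon> = (1/2) ^ (l - 1)"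
    define a where "a = 2 * ln (2 / \<epsilon>)"
    define t where "t = 5/4 * \<epsilon> - exp (1 - a)"
    define tu where "tu = 5/4 * \<epsilon>"
    define Rst where "Rst = Rstar K \<Delta> (\<Delta> k')"
    define v' where "v' = vstar K MM c B Rst"
    define Zf where "Zf i = (\<Sum>j<K. real (m j) / MM i j)" for i
    define S where "S i \<omega> = (\<Sum>x\<in>I. Xfun \<epsilon> i (fst x) (\<omega> x))" for i \<omega>
    define ES where "ES i = (\<Sum>x\<in>I. integral\<^sup>L (MS x) (Xfun \<epsilon> i (fst x)))" for i
    define Fe where "Fe \<omega> = eliminate l R (\<lambda>k. est K MM P m \<epsilon> k \<omega>)" for \<omega>
    have phase: "sris_phase K q P Yk nu T l R = distr \<Omega> (count_space UNIV) Fe"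
    proof -
      have e1: "(\<lambda>(j, s). arm_law q P Yk j) = MS" by (auto simp: MS_def)
      have "sris_phase K q P Yk nu T l R = (let m = pulls (nu R) T l; I = {(j, s). j < K \<and> s < m j} in
            distr (PiM I (\<lambda>(j, s). arm_law q P Yk j)) (count_space UNIV)
              (\<lambda>\<omega>. eliminate l R (\<lambda>k. est K (Mdiv q P) P m ((1/2) ^ (l - 1)) k \<omega>)))"
        unfolding sris_phase_def by (rule if_not_P[OF False])
      also have "\<dots> = distr \<Omega> (count_space UNIV) Fe"
        unfolding Let_def e1 \<Omega>_def I_def m_def \<nu>_def Fe_def \<epsilon>_def ..
      finally show ?thesis .
    qed
    have finI: "finite I" unfolding I_def by (rule fin_I)
    have probMS: "\<And>x. prob_space (MS x)" by (simp add: MS_def A.arm_prob)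
    interpret \<Omega>: prob_space \<Omega> unfolding \<Omega>_def by (rule prob_space_PiM[OF probMS])
    have Ik: "\<And>x. x \<in> I \<Longrightarrow> fst x < K" by (auto simp: I_def)
    have Rst: "Rst \<noteq> {}" "Rst \<subseteq> {..<K}"
      using kstar Delta_kstar by (auto simp: Rst_def Rstar_def gap_level_def)
    have v': "0 < v'" "v' \<le> 1" unfolding v'_def using vstar_pos_le1[OF Rst] by auto
    have Dk': "0 < \<Delta> k'" "\<Delta> k' \<le> 1" using Delta_pos[OF k'(1,2)] Delta_le1 by auto
    have levk': "real l - 1 \<le> real_of_int \<lfloor>log 2 (10 / \<Delta> k')\<rfloor>"
      using k'(3) l unfolding lev_def by (simp add: of_nat_diff)
    have Tp: "0 < real T" using Tpos by simp
    have RsubRst: "R \<subseteq> Rst"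
    proof
      fix i assume i: "i \<in> R"
      have iK: "i < K" using i R by auto
      show "i \<in> Rst"
      proof (cases "i = kstar")
        case True thus ?thesis using Rst kstar Delta_kstar by (auto simp: Rst_def Rstar_def gap_level_def)
      next
        case False
        have "lev k' \<le> lev i" using kmin[OF iK False levR[OF i False]] .
        thus ?thesis using iK False gap_level_eq[OF iK False] gap_level_eq[OF k'(1,2)]
          by (auto simp: Rst_def Rstar_def)
      qed
    qed
    have nuf: "feasible K c B \<nu>" unfolding \<nu>_def by (rule nu_feas[OF R(1,2)])
    have Zf_ge: "T / (real l * hh) * v' \<le> Zf i" if i: "i \<in> R" for i
    proof -
      have iK: "i < K" using i R by auto
      define \<tau> where "\<tau> = tau T l"
      have tau_eq: "\<tau> = T / (real l * hh)" by (simp add: \<tau>_def tau_def hh_def)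
      have tau0: "0 \<le> \<tau>" using tau_eq hh_pos by simp
      have Mpos: "\<And>j. j < K \<Longrightarrow> 0 < MM i j" using M_ge1[OF iK] by (meson less_le_trans zero_less_one)
      have "\<tau> * v' \<le> \<tau> * vstar K MM c B R"
        unfolding v'_def using vstar_mono[OF R(1) RsubRst Rst(2)] tau0 by (intro mult_left_mono) auto
      also have "vstar K MM c B R = alloc_obj K MM R \<nu>" unfolding \<nu>_def by (rule vstar_eq[OF R(1,2)])
      also have "alloc_obj K MM R \<nu> \<le> (\<Sum>j<K. \<nu> j / MM i j)"
        unfolding alloc_obj_def using finR i by (intro Min_le) auto
      also have "\<tau> * (\<Sum>j<K. \<nu> j / MM i j) = (\<Sum>j<K. (\<nu> j * \<tau>) / MM i j)"
        by (simp add: sum_distrib_left mult.commute)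
      also have "\<dots> \<le> Zf i" unfolding Zf_def
      proof (intro sum_mono divide_right_mono)
        fix j assume j: "j \<in> {..<K}"
        show "\<nu> j * \<tau> \<le> real (m j)" unfolding m_def pulls_def \<tau>_def by linarith
        show "0 \<le> MM i j" using Mpos j by (simp add: less_imp_le)
      qed
      finally have "\<tau> * v' \<le> Zf i" using tau0 by (simp add: mult_left_mono)
      thus ?thesis by (simp add: tau_eq)
    qed
    have ex: "T / (2 * ((log 2 (10 / \<Delta> k')) ^ 3 / ((\<Delta> k' / 10) ^ 2 * v' ^ 2)) * hh) \<le> t\<^sup>2 * Zf i / (4 * a)"
      and a1: "1 \<le> a" and t0: "0 < t" and ttu: "t \<le> tu" and eps1: "\<epsilon> \<le> 1"
      and bias_t: "exp (1 - a) \<le> tu - t" if i: "i \<in> R" for i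
      using expo[OF l Dk' levk' v' Tp hh_pos Zf_ge[OF i]] unfolding \<epsilon>_def a_def t_def tu_def by auto
    have a1': "1 \<le> a" and t0': "0 < t" and ttu': "t \<le> tu" and eps1': "\<epsilon> \<le> 1" and bias_t': "exp (1 - a) \<le> tu - t"
      using a1 t0 ttu eps1 bias_t R(3) by auto
    have Zpos: "0 < Zf i" if "i \<in> R" for i
      using Zf_ge[OF that] v' Tp hh_pos l by (smt (verit) divide_pos_pos mult_pos_pos of_nat_0_less_iff less_le_trans zero_less_one)
    have XF: "Xfun \<epsilon> i (fst x) \<in> borel_measurable (MS x)"
       "AE y in MS x. 0 \<le> Xfun \<epsilon> i (fst x) y \<and> Xfun \<epsilon> i (fst x) y \<le> a"
       "integral\<^sup>L (MS x) (Xfun \<epsilon> i (fst x)) \<le> 1 / MM i (fst x)"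
       "0 \<le> \<mu> i - MM i (fst x) * integral\<^sup>L (MS x) (Xfun \<epsilon> i (fst x))"
       "\<mu> i - MM i (fst x) * integral\<^sup>L (MS x) (Xfun \<epsilon> i (fst x)) \<le> exp (1 - a)"
      if i: "i \<in> R" and x: "x \<in> I" for i x
    proof -
      have iK: "i < K" using i R by auto
      have XX: "Xfun \<epsilon> i (fst x) \<in> borel_measurable (arm_law q P Yk (fst x))"
       "AE y in arm_law q P Yk (fst x). 0 \<le> Xfun \<epsilon> i (fst x) y \<and> Xfun \<epsilon> i (fst x) y \<le> a"
       "integral\<^sup>L (arm_law q P Yk (fst x)) (Xfun \<epsilon> i (fst x)) \<le> 1 / MM i (fst x)"
       "0 \<le> \<mu> i - MM i (fst x) * integral\<^sup>L (arm_law q P Yk (fst x)) (Xfun \<epsilon> i (fst x))"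
       "\<mu> i - MM i (fst x) * integral\<^sup>L (arm_law q P Yk (fst x)) (Xfun \<epsilon> i (fst x)) \<le> exp (1 - a)"
        by (rule Xf_facts[OF iK Ik[OF x] a1'], simp add: Xfun_def a_def)+
      show "Xfun \<epsilon> i (fst x) \<in> borel_measurable (MS x)"
       "AE y in MS x. 0 \<le> Xfun \<epsilon> i (fst x) y \<and> Xfun \<epsilon> i (fst x) y \<le> a"
       "integral\<^sup>L (MS x) (Xfun \<epsilon> i (fst x)) \<le> 1 / MM i (fst x)"
       "0 \<le> \<mu> i - MM i (fst x) * integral\<^sup>L (MS x) (Xfun \<epsilon> i (fst x))"
       "\<mu> i - MM i (fst x) * integral\<^sup>L (MS x) (Xfun \<epsilon> i (fst x)) \<le> exp (1 - a)"
        using XX unfolding MS_def by auto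
    qed
    have Zsum: "Zf i = (\<Sum>x\<in>I. 1 / MM i (fst x))" for i
      unfolding Zf_def I_def sum_I by simp
    have a0: "0 < a" using a1' by simp
    have HE: "exp (- (tt\<^sup>2 * Zf i / (4 * a))) \<le> Ebound" if i: "i \<in> R" and tt: "t \<le> tt" for i tt
    proof -
      have "t\<^sup>2 \<le> tt\<^sup>2" using t0' tt by (intro power_mono) auto
      hence "t\<^sup>2 * Zf i / (4 * a) \<le> tt\<^sup>2 * Zf i / (4 * a)"
        using Zpos[OF i] a0 by (intro divide_right_mono mult_right_mono) auto
      moreover have hdef: "Hterm K MM c B \<Delta> k' = (log 2 (10 / \<Delta> k')) ^ 3 / ((\<Delta> k' / 10) ^ 2 * v' ^ 2)"
        by (simp add: Hterm_def v'_def Rst_def)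
      ultimately have "real T / (2 * Hterm K MM c B \<Delta> k' * hh) \<le> tt\<^sup>2 * Zf i / (4 * a)"
        unfolding hdef using ex[OF i] by linarith
      thus ?thesis unfolding Ebound_def by simp
    qed
    define U where "U i = {\<omega> \<in> space \<Omega>. tu / (2 * a) * (S i \<omega> - ES i) \<ge> tu\<^sup>2 * Zf i / (2 * a)}" for i
    define L where "L i = {\<omega> \<in> space \<Omega>. (- t / (2 * a)) * (S i \<omega> - ES i) \<ge> t\<^sup>2 * Zf i / (2 * a)}" for i
    have cher: "emeasure \<Omega> {\<omega> \<in> space \<Omega>. \<theta> * (S i \<omega> - ES i) \<ge> lam}
        \<le> ennreal (exp (\<theta>\<^sup>2 * a * Zf i - lam))" if i: "i \<in> R" and th: "\<bar>\<theta> * a\<bar> \<le> 1" for i \<theta> lam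
    proof -
      have "emeasure (PiM I MS) {\<omega> \<in> space (PiM I MS).
            \<theta> * ((\<Sum>x\<in>I. Xfun \<epsilon> i (fst x) (\<omega> x)) - (\<Sum>x\<in>I. integral\<^sup>L (MS x) (Xfun \<epsilon> i (fst x)))) \<ge> lam}
         \<le> ennreal (exp (\<theta>\<^sup>2 * a * (\<Sum>x\<in>I. 1 / MM i (fst x)) - lam))"
        by (rule chernoff_PiM[OF probMS finI XF(1)[OF i] XF(2)[OF i] XF(3)[OF i] a0 th exp_le_quad
              exp_convex_bound[OF a0]])
      thus ?thesis unfolding \<Omega>_def S_def ES_def Zsum by simp
    qed
    have eU: "emeasure \<Omega> (U i) \<le> ennreal Ebound" if i: "i \<in> R" for i
    proof -
      have th: "\<bar>tu / (2 * a) * a\<bar> \<le> 1" using a0 eps1' t0' ttu' by (simp add: tu_def abs_if)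
      have "emeasure \<Omega> (U i) \<le> ennreal (exp ((tu / (2 * a))\<^sup>2 * a * Zf i - tu\<^sup>2 * Zf i / (2 * a)))"
        unfolding U_def by (rule cher[OF i th])
      also have "(tu / (2 * a))\<^sup>2 * a * Zf i - tu\<^sup>2 * Zf i / (2 * a) = - (tu\<^sup>2 * Zf i / (4 * a))"
        using a0 by (simp add: power2_eq_square field_simps)
      also have "exp (- (tu\<^sup>2 * Zf i / (4 * a))) \<le> Ebound" by (rule HE[OF i ttu'])
      finally show ?thesis by (simp add: ennreal_leI)
    qed
    have eL: "emeasure \<Omega> (L i) \<le> ennreal Ebound" if i: "i \<in> R" for i
    proof -
      have th: "\<bar>- t / (2 * a) * a\<bar> \<le> 1" using a0 eps1' t0' ttu' by (simp add: tu_def abs_if)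
      have "emeasure \<Omega> (L i) \<le> ennreal (exp ((- t / (2 * a))\<^sup>2 * a * Zf i - t\<^sup>2 * Zf i / (2 * a)))"
        unfolding L_def by (rule cher[OF i th])
      also have "(- t / (2 * a))\<^sup>2 * a * Zf i - t\<^sup>2 * Zf i / (2 * a) = - (t\<^sup>2 * Zf i / (4 * a))"
        using a0 by (simp add: power2_eq_square field_simps)
      also have "exp (- (t\<^sup>2 * Zf i / (4 * a))) \<le> Ebound" by (rule HE[OF i order_refl])
      finally show ?thesis by (simp add: ennreal_leI)
    qed
    have Mpos: "0 < MM i j" if "i \<in> R" "j < K" for i j
      using M_ge1[of i j] that R by (meson less_le_trans subsetD lessThan_iff zero_less_one)
    have bias: "0 \<le> \<mu> i * Zf i - ES i" "\<mu> i * Zf i - ES i \<le> exp (1 - a) * Zf i" if i: "i \<in> R" for i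
    proof -
      have eq: "\<mu> i * Zf i - ES i = (\<Sum>x\<in>I. (\<mu> i - MM i (fst x) * integral\<^sup>L (MS x) (Xfun \<epsilon> i (fst x))) / MM i (fst x))"
      proof -
        have "\<mu> i * Zf i - ES i = (\<Sum>x\<in>I. \<mu> i / MM i (fst x) - integral\<^sup>L (MS x) (Xfun \<epsilon> i (fst x)))"
          by (simp add: Zsum ES_def sum_distrib_left sum_subtractf)
        also have "\<dots> = (\<Sum>x\<in>I. (\<mu> i - MM i (fst x) * integral\<^sup>L (MS x) (Xfun \<epsilon> i (fst x))) / MM i (fst x))"
        proof (intro sum.cong refl)
          fix x assume x: "x \<in> I"
          have "MM i (fst x) \<noteq> 0" using Mpos[OF i Ik[OF x]] by simp
          thus "\<mu> i / MM i (fst x) - integral\<^sup>L (MS x) (Xfun \<epsilon> i (fst x)) =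
              (\<mu> i - MM i (fst x) * integral\<^sup>L (MS x) (Xfun \<epsilon> i (fst x))) / MM i (fst x)"
            by (simp add: diff_divide_distrib)
        qed
        finally show ?thesis .
      qed
      show "0 \<le> \<mu> i * Zf i - ES i" unfolding eq
        using XF(4)[OF i] Mpos[OF i] Ik by (intro sum_nonneg divide_nonneg_pos) auto
      have "\<mu> i * Zf i - ES i \<le> (\<Sum>x\<in>I. exp (1 - a) / MM i (fst x))" unfolding eq
        using XF(5)[OF i] Mpos[OF i] Ik by (intro sum_mono divide_right_mono) (auto simp: less_imp_le)
      also have "\<dots> = exp (1 - a) * Zf i" by (simp add: Zsum sum_distrib_left)
      finally show "\<mu> i * Zf i - ES i \<le> exp (1 - a) * Zf i" .
    qed
    have est_S: "est K MM P m \<epsilon> i \<omega> = S i \<omega> / Zf i" for i \<omega>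
      unfolding est_eq S_def Zf_def I_def by simp
    have good: "Inv l (Fe \<omega>)" if w: "\<omega> \<in> space \<Omega>" "\<forall>i\<in>R. \<omega> \<notin> U i \<and> \<omega> \<notin> L i" for \<omega>
    proof -
      have "\<bar>est K MM P m \<epsilon> i \<omega> - \<mu> i\<bar> < 5/4 * (1/2) ^ (l - 1)" if i: "i \<in> R" for i
      proof -
        have Z0: "0 < Zf i" by (rule Zpos[OF i])
        have c0: "0 < tu / (2 * a)" using a0 t0' ttu' by simp
        have "\<not> tu / (2 * a) * (S i \<omega> - ES i) \<ge> tu\<^sup>2 * Zf i / (2 * a)" using w i by (auto simp: U_def)
        moreover have "tu\<^sup>2 * Zf i / (2 * a) = tu / (2 * a) * (tu * Zf i)" by (simp add: power2_eq_square)
        ultimately have h1: "tu / (2 * a) * (S i \<omega> - ES i) < tu / (2 * a) * (tu * Zf i)" by linarith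
        have up: "S i \<omega> - ES i < tu * Zf i" using iffD1[OF mult_less_cancel_left_pos[OF c0] h1] .
        have c1: "0 < t / (2 * a)" using a0 t0' by simp
        have "\<not> (- t / (2 * a)) * (S i \<omega> - ES i) \<ge> t\<^sup>2 * Zf i / (2 * a)" using w i by (auto simp: L_def)
        moreover have "t\<^sup>2 * Zf i / (2 * a) = t / (2 * a) * (t * Zf i)" by (simp add: power2_eq_square)
        moreover have "(- t / (2 * a)) * (S i \<omega> - ES i) = t / (2 * a) * (ES i - S i \<omega>)"
        proof -
          have "(- t / (2 * a)) = - (t / (2 * a))" by simp
          thus ?thesis by (simp only: mult_minus_left minus_mult_right minus_diff_eq)
        qed
        ultimately have h2: "t / (2 * a) * (ES i - S i \<omega>) < t / (2 * a) * (t * Zf i)" by linarith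
        have lo: "ES i - S i \<omega> < t * Zf i" using iffD1[OF mult_less_cancel_left_pos[OF c1] h2] .
        have b: "0 \<le> \<mu> i * Zf i - ES i" "\<mu> i * Zf i - ES i \<le> (tu - t) * Zf i"
          using bias[OF i] bias_t' Z0 by (auto intro: order_trans mult_right_mono)
        have "S i \<omega> - \<mu> i * Zf i < tu * Zf i" "\<mu> i * Zf i - S i \<omega> < tu * Zf i"
          using up lo b by (auto simp: algebra_simps)
        hence "\<bar>S i \<omega> - \<mu> i * Zf i\<bar> < tu * Zf i" by auto
        hence "\<bar>S i \<omega> - \<mu> i * Zf i\<bar> / Zf i < tu" using Z0 by (simp add: divide_less_eq)
        moreover have "\<bar>S i \<omega> - \<mu> i * Zf i\<bar> / Zf i = \<bar>(S i \<omega> - \<mu> i * Zf i) / Zf i\<bar>"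
          using Z0 by (simp add: abs_divide)
        moreover have "(S i \<omega> - \<mu> i * Zf i) / Zf i = S i \<omega> / Zf i - \<mu> i"
          using Z0 by (simp add: diff_divide_distrib)
        moreover have "tu = 5/4 * (1/2) ^ (l - 1)" by (simp add: tu_def \<epsilon>_def)
        ultimately show ?thesis unfolding est_S by linarith
      qed
      thus ?thesis unfolding Fe_def by (rule elim_inv[OF l inv])
    qed
    have S_meas: "S i \<in> borel_measurable \<Omega>" for i
    proof -
      have "(\<lambda>\<omega>. \<Sum>x\<in>I. Xfun \<epsilon> i (fst x) (\<omega> x)) \<in> borel_measurable \<Omega>"
      proof (intro borel_measurable_sum)
        fix x assume x: "x \<in> I"
        show "(\<lambda>\<omega>. Xfun \<epsilon> i (fst x) (\<omega> x)) \<in> borel_measurable \<Omega>"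
          unfolding \<Omega>_def MS_def by (rule measurable_compose[OF measurable_component_singleton[OF x] Xfun_meas])
      qed
      thus ?thesis by (simp add: S_def[abs_def])
    qed
    have UL_sets: "U i \<in> sets \<Omega>" "L i \<in> sets \<Omega>" for i
      unfolding U_def L_def using S_meas[of i] by measurable
    have Fe_meas: "Fe \<in> measurable \<Omega> (count_space UNIV)"
      unfolding Fe_def
    proof (rule elim_meas[OF finR])
      fix k show "(\<lambda>\<omega>. est K MM P m \<epsilon> k \<omega>) \<in> borel_measurable \<Omega>"
        unfolding \<Omega>_def MS_def I_def by (rule est_meas)
    qed
    have "emeasure (sris_phase K q P Yk nu T l R) {R'. \<not> Inv l R'} = emeasure \<Omega> (Fe -` {R'. \<not> Inv l R'} \<inter> space \<Omega>)"
      unfolding phase by (rule emeasure_distr[OF Fe_meas]) simp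
    also have "\<dots> \<le> emeasure \<Omega> (\<Union>i\<in>R. U i \<union> L i)"
    proof (rule emeasure_mono)
      show "Fe -` {R'. \<not> Inv l R'} \<inter> space \<Omega> \<subseteq> (\<Union>i\<in>R. U i \<union> L i)"
        using good by blast
      show "(\<Union>i\<in>R. U i \<union> L i) \<in> sets \<Omega>" using finR UL_sets by auto
    qed
    also have "\<dots> \<le> (\<Sum>i\<in>R. emeasure \<Omega> (U i \<union> L i))"
      by (rule emeasure_subadditive_finite[OF finR]) (use UL_sets in auto)
    also have "\<dots> \<le> (\<Sum>i\<in>R. ennreal (2 * Ebound))"
    proof (intro sum_mono)
      fix i assume i: "i \<in> R"
      have "emeasure \<Omega> (U i \<union> L i) \<le> emeasure \<Omega> (U i) + emeasure \<Omega> (L i)"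
        by (rule emeasure_subadditive) (use UL_sets in auto)
      also have "\<dots> \<le> ennreal Ebound + ennreal Ebound" by (intro add_mono eU[OF i] eL[OF i])
      also have "\<dots> = ennreal (2 * Ebound)" using Eb0 by (simp add: ennreal_plus[symmetric] del: ennreal_plus)
      finally show "emeasure \<Omega> (U i \<union> L i) \<le> ennreal (2 * Ebound)" .
    qed
    also have "\<dots> = ennreal (real (card R) * (2 * Ebound))" using Eb0 by (simp add: ennreal_mult ennreal_of_nat_eq_real_of_nat)
    also have "\<dots> \<le> ennreal (2 * real K * Ebound)"
    proof (intro ennreal_leI)
      have "card R \<le> card {..<K}" using R(2) by (intro card_mono) auto
      hence "real (card R) \<le> real K" by simp
      thus "real (card R) * (2 * Ebound) \<le> 2 * real K * Ebound" using Eb0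
        by (simp add: mult_right_mono mult.left_commute)
    qed
    finally show ?thesis unfolding Ebound_def .
  qed
qed

end



context sris_ctx begin

abbreviation "phase l R \<equiv> sris_phase K q P Yk nu T l R"
abbreviation "run l \<equiv> sris_run K q P Yk nu T l"

lemma phase_distr:
  assumes "\<not> card R \<le> 1"
  shows "phase l R = distr (PiM {(j, s). j < K \<and> s < pulls (nu R) T l j} (\<lambda>x. arm_law q P Yk (fst x))) (count_space UNIV)
           (\<lambda>\<omega>. eliminate l R (\<lambda>k. est K MM P (pulls (nu R) T l) ((1/2) ^ (l - 1)) k \<omega>))"
proof -
  have e1: "(\<lambda>(j, s). arm_law q P Yk j) = (\<lambda>x. arm_law q P Yk (fst x))" by auto
  have "phase l R = (let m = pulls (nu R) T l; I = {(j, s). j < K \<and> s < m j} in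
            distr (PiM I (\<lambda>(j, s). arm_law q P Yk j)) (count_space UNIV)
              (\<lambda>\<omega>. eliminate l R (\<lambda>k. est K (Mdiv q P) P m ((1/2) ^ (l - 1)) k \<omega>)))"
    unfolding sris_phase_def by (rule if_not_P[OF assms(1)])
  thus ?thesis unfolding Let_def e1 .
qed

lemma phase_return: "card R \<le> 1 \<Longrightarrow> phase l R = return (count_space UNIV) R"
  unfolding sris_phase_def by (rule if_P)

lemma Fe_meas_gen:
  assumes "finite R"
  shows "(\<lambda>\<omega>. eliminate l R (\<lambda>k. est K MM P m \<epsilon> k \<omega>)) \<in>
     measurable (PiM {(j, s). j < K \<and> s < m j} (\<lambda>x. arm_law q P Yk (fst x))) (count_space UNIV)"
  by (rule elim_meas[OF assms est_meas])

lemma phase_prob: "prob_space (phase l R)" and phase_sets: "sets (phase l R) = sets (count_space UNIV)"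
proof -
  have "prob_space (phase l R) \<and> sets (phase l R) = sets (count_space UNIV)"
  proof (cases "card R \<le> 1")
    case True thus ?thesis by (simp add: phase_return prob_space_return)
  next
    case False
    hence fin: "finite R" using card.infinite by force
    have pr: "prob_space (PiM {(j, s). j < K \<and> s < pulls (nu R) T l j} (\<lambda>x. arm_law q P Yk (fst x)))"
      by (rule prob_space_PiM) (simp add: A.arm_prob)
    show ?thesis unfolding phase_distr[OF False]
      using prob_space.prob_space_distr[OF pr Fe_meas_gen[OF fin]] by simp
  qed
  thus "prob_space (phase l R)" "sets (phase l R) = sets (count_space UNIV)" by auto
qed

lemma phase_zero:
  assumes "card R \<le> 1 \<Longrightarrow> R \<notin> A" and "\<not> card R \<le> 1 \<Longrightarrow> (\<And>R'. R' \<subseteq> R \<Longrightarrow> R' \<noteq> {} \<Longrightarrow> R' \<notin> A)"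
  shows "emeasure (phase l R) A = 0"
proof (cases "card R \<le> 1")
  case True thus ?thesis using assms(1) by (simp add: phase_return)
next
  case False
  hence fin: "finite R" using card.infinite by force
  have ne: "R \<noteq> {}" using False by auto
  let ?\<Omega> = "PiM {(j, s). j < K \<and> s < pulls (nu R) T l j} (\<lambda>x. arm_law q P Yk (fst x))"
  let ?F = "\<lambda>\<omega>. eliminate l R (\<lambda>k. est K MM P (pulls (nu R) T l) ((1/2) ^ (l - 1)) k \<omega>)"
  have "emeasure (phase l R) A = emeasure ?\<Omega> (?F -` A \<inter> space ?\<Omega>)"
    unfolding phase_distr[OF False] by (rule emeasure_distr[OF Fe_meas_gen[OF fin]]) simp
  also have "?F -` A \<inter> space ?\<Omega> = {}"
  proof -
    have "?F \<omega> \<notin> A" for \<omega>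
    proof (rule assms(2)[OF False])
      show "?F \<omega> \<subseteq> R" by (auto simp: eliminate_def)
      let ?Y = "\<lambda>k. est K MM P (pulls (nu R) T l) ((1/2) ^ (l - 1)) k \<omega>"
      have "Max (?Y ` R) \<in> ?Y ` R" using fin ne by (intro Max_in) auto
      then obtain i0 where "i0 \<in> R" "Max (?Y ` R) = ?Y i0" by auto
      hence "i0 \<in> ?F \<omega>" by (auto simp: eliminate_def)
      thus "?F \<omega> \<noteq> {}" by auto
    qed
    thus ?thesis by auto
  qed
  finally show ?thesis by simp
qed

lemma run_sets: "sets (run l) = sets (count_space UNIV)" and run_prob: "prob_space (run l)"
proof -
  have "sets (run l) = sets (count_space UNIV) \<and> prob_space (run l)"
  proof (induction l)
    case 0 thus ?case by (simp add: prob_space_return)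
  next
    case (Suc l)
    have kern: "phase (Suc l) \<in> measurable (run l) (subprob_algebra (count_space UNIV))"
      using Suc.IH by (simp add: measurable_cong_sets[OF Suc.IH[THEN conjunct1] refl] space_subprob_algebra
          phase_sets prob_space_imp_subprob_space[OF phase_prob])
    have ne: "space (run l) \<noteq> {}" using Suc.IH by (simp add: prob_space.not_empty)
    show ?case
    proof
      show "sets (run (Suc l)) = sets (count_space UNIV)"
        by (simp del: sets_count_space, rule sets_bind[OF _ ne]) (simp add: phase_sets)
      show "prob_space (run (Suc l))"
        by (simp, rule prob_space.prob_space_bind[OF Suc.IH[THEN conjunct2] _ kern]) (simp add: phase_prob)
    qed
  qed
  thus "sets (run l) = sets (count_space UNIV)" "prob_space (run l)" by auto
qed

lemma run_kern: "phase l' \<in> measurable (run l) (subprob_algebra (count_space UNIV))"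
  by (simp add: measurable_cong_sets[OF run_sets refl] space_subprob_algebra
          phase_sets prob_space_imp_subprob_space[OF phase_prob])

lemma run_Suc_emeasure:
  "emeasure (run (Suc l)) A = (\<integral>\<^sup>+R. emeasure (phase (Suc l) R) A \<partial>run l)"
proof -
  have ne: "space (run l) \<noteq> {}" using run_prob by (simp add: prob_space.not_empty)
  show ?thesis by (simp, rule emeasure_bind[OF ne run_kern]) simp
qed

end



context sris_ctx begin

lemma Hterm_pos: assumes "k < K" "k \<noteq> kstar" shows "0 < Hterm K MM c B \<Delta> k"
proof -
  have D: "0 < \<Delta> k" "\<Delta> k \<le> 1" using Delta_pos[OF assms] Delta_le1 by auto
  have "1 \<le> 10 / \<Delta> k" using D by (simp add: field_simps)
  have "1 < 10 / \<Delta> k" using D by (simp add: field_simps)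
  hence L: "0 < log 2 (10 / \<Delta> k)" using D by simp
  have Rs: "Rstar K \<Delta> (\<Delta> k) \<noteq> {}" "Rstar K \<Delta> (\<Delta> k) \<subseteq> {..<K}"
    using kstar Delta_kstar by (auto simp: Rstar_def gap_level_def)
  have v: "0 < vstar K MM c B (Rstar K \<Delta> (\<Delta> k))" by (rule vstar_pos_le1(1)[OF Rs])
  show ?thesis unfolding Hterm_def using L D v by simp
qed

lemma run_mono_step:
  assumes "\<And>R. R \<notin> A \<Longrightarrow> emeasure (phase (Suc l) R) A = 0"
  shows "emeasure (run (Suc l)) A \<le> emeasure (run l) A"
proof -
  have "emeasure (run (Suc l)) A = (\<integral>\<^sup>+R. emeasure (phase (Suc l) R) A \<partial>run l)" by (rule run_Suc_emeasure)
  also have "\<dots> \<le> (\<integral>\<^sup>+R. indicator A R \<partial>run l)"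
  proof (intro nn_integral_mono)
    fix R
    show "emeasure (phase (Suc l) R) A \<le> indicator A R"
    proof (cases "R \<in> A")
      case True thus ?thesis using prob_space.emeasure_le_1[OF phase_prob] by simp
    qed (simp add: assms)
  qed
  also have "\<dots> = emeasure (run l) A" by (simp add: run_sets)
  finally show ?thesis .
qed

lemma run_mono:
  assumes "\<And>l'' R. R \<notin> A \<Longrightarrow> emeasure (phase l'' R) A = 0" and "l \<le> l'"
  shows "emeasure (run l') A \<le> emeasure (run l) A"
  using assms(2)
proof (induction l' rule: dec_induct)
  case (step l') thus ?case using run_mono_step[of A l'] assms(1) by (meson order_trans)
qed simp

lemma run_support: "emeasure (run l) {R. \<not> (R \<noteq> {} \<and> R \<subseteq> {..<K})} = 0"
proof -
  let ?A = "{R. \<not> (R \<noteq> {} \<and> R \<subseteq> {..<K})}"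
  have z: "emeasure (phase l'' R) ?A = 0" if "R \<notin> ?A" for l'' R
    by (rule phase_zero) (use that in auto)
  have "emeasure (run l) ?A \<le> emeasure (run 0) ?A" by (rule run_mono[OF z]) auto
  also have "\<dots> = 0"
  proof -
    have "{..<K} \<noteq> {}" using kstar by auto
    thus ?thesis by (simp add: indicator_def)
  qed
  finally show ?thesis by simp
qed

lemma run_inv:
  assumes H: "0 < H"
    and hyp: "\<And>l'. 1 \<le> l' \<Longrightarrow> l' \<le> l \<Longrightarrow> \<exists>k'. k' < K \<and> k' \<noteq> kstar \<and> int (l' - 1) \<le> lev k' \<and>
       (\<forall>i. i < K \<longrightarrow> i \<noteq> kstar \<longrightarrow> int (l' - 1) \<le> lev i \<longrightarrow> lev k' \<le> lev i) \<and> Hterm K MM c B \<Delta> k' \<le> H"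
  shows "emeasure (run l) {R. \<not> Inv l R} \<le> ennreal (real l * (2 * real K * exp (- real T / (2 * H * hh))))"
  using hyp
proof (induction l)
  case 0
  have l0: "0 \<le> lev i" if "i < K" "i \<noteq> kstar" for i
  proof -
    have "3 \<le> lev i" by (rule lev_ge3[OF that])
    thus ?thesis by simp
  qed
  have "Inv 0 {..<K}" using kstar l0 by (auto simp: Inv_def)
  thus ?case by simp
next
  case (Suc l)
  define E2 where "E2 = 2 * real K * exp (- real T / (2 * H * hh))"
  have E20: "0 \<le> E2" by (simp add: E2_def)
  have IH: "emeasure (run l) {R. \<not> Inv l R} \<le> ennreal (real l * E2)"
    unfolding E2_def using Suc.prems by (intro Suc.IH) auto
  obtain k' where k': "k' < K" "k' \<noteq> kstar" "int (Suc l - 1) \<le> lev k'"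
    "\<And>i. i < K \<Longrightarrow> i \<noteq> kstar \<Longrightarrow> int (Suc l - 1) \<le> lev i \<Longrightarrow> lev k' \<le> lev i"
    and Hk': "Hterm K MM c B \<Delta> k' \<le> H"
    using Suc.prems[of "Suc l"] by auto
  have pb: "emeasure (phase (Suc l) R) {R'. \<not> Inv (Suc l) R'} \<le> ennreal E2" if "Inv l R" for R
  proof -
    have "emeasure (phase (Suc l) R) {R'. \<not> Inv (Suc l) R'}
        \<le> ennreal (2 * real K * exp (- real T / (2 * Hterm K MM c B \<Delta> k' * hh)))"
      by (rule phase_bound) (use that k' in auto)
    also have "\<dots> \<le> ennreal E2" unfolding E2_def
    proof (intro ennreal_leI mult_left_mono)
      have hp: "0 < Hterm K MM c B \<Delta> k'" by (rule Hterm_pos[OF k'(1,2)])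
      have "real T / (2 * H * hh) \<le> real T / (2 * Hterm K MM c B \<Delta> k' * hh)"
        using hp Hk' hh_pos by (intro divide_left_mono mult_right_mono mult_pos_pos) auto
      thus "exp (- real T / (2 * Hterm K MM c B \<Delta> k' * hh)) \<le> exp (- real T / (2 * H * hh))" by simp
    qed simp
    finally show ?thesis .
  qed
  have "emeasure (run (Suc l)) {R. \<not> Inv (Suc l) R} = (\<integral>\<^sup>+R. emeasure (phase (Suc l) R) {R'. \<not> Inv (Suc l) R'} \<partial>run l)"
    by (rule run_Suc_emeasure)
  also have "\<dots> \<le> (\<integral>\<^sup>+R. indicator {R. \<not> Inv l R} R + ennreal E2 \<partial>run l)"
  proof (intro nn_integral_mono)
    fix R
    show "emeasure (phase (Suc l) R) {R'. \<not> Inv (Suc l) R'} \<le> indicator {R. \<not> Inv l R} R + ennreal E2"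
    proof (cases "Inv l R")
      case True thus ?thesis using pb[OF True] by simp
    next
      case False thus ?thesis using prob_space.emeasure_le_1[OF phase_prob] by (simp add: add_increasing2)
    qed
  qed
  also have "\<dots> = (\<integral>\<^sup>+R. indicator {R. \<not> Inv l R} R \<partial>run l) + (\<integral>\<^sup>+R. ennreal E2 \<partial>run l)"
    by (rule nn_integral_add) (simp_all add: measurable_cong_sets[OF run_sets refl])
  also have "\<dots> = emeasure (run l) {R. \<not> Inv l R} + ennreal E2"
    using prob_space.emeasure_space_1[OF run_prob] by (simp add: run_sets)
  also have "\<dots> \<le> ennreal (real l * E2) + ennreal E2" by (intro add_mono IH order_refl)
  also have "\<dots> = ennreal (real (Suc l) * E2)" using E20 by (simp add: ennreal_plus[symmetric] algebra_simps del: ennreal_plus)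
  finally show ?case by (simp add: E2_def)
qed

end



context sris_ctx begin

abbreviation "out \<equiv> sris_output K q P Yk nu T"
abbreviation "nT \<equiv> n_phases T"

lemma out_kern: "(\<lambda>R. measure_pmf (pmf_of_set R)) \<in> measurable (run l) (subprob_algebra (count_space UNIV))"
  by (simp add: measurable_cong_sets[OF run_sets refl] space_subprob_algebra
      prob_space_imp_subprob_space[OF prob_space_measure_pmf])

lemma out_emeasure: "emeasure out A = (\<integral>\<^sup>+R. emeasure (measure_pmf (pmf_of_set R)) A \<partial>run nT)"
proof -
  have ne: "space (run nT) \<noteq> {}" using run_prob by (simp add: prob_space.not_empty)
  show ?thesis unfolding sris_output_def by (rule emeasure_bind[OF ne out_kern]) simp
qed

lemma out_prob: "prob_space out"
  unfolding sris_output_def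
  by (rule prob_space.prob_space_bind[OF run_prob _ out_kern]) (simp add: prob_space_measure_pmf)

lemma out_single: "emeasure out {k} \<le> emeasure (run nT) {R. k \<in> R}"
proof -
  let ?B = "{R. \<not> (R \<noteq> {} \<and> R \<subseteq> {..<K})}"
  have "emeasure out {k} \<le> (\<integral>\<^sup>+R. indicator ({R. k \<in> R} \<union> ?B) R \<partial>run nT)"
    unfolding out_emeasure
  proof (intro nn_integral_mono)
    fix R :: "nat set"
    show "emeasure (measure_pmf (pmf_of_set R)) {k} \<le> indicator ({R. k \<in> R} \<union> ?B) R"
    proof (cases "R \<in> {R. k \<in> R} \<union> ?B")
      case True thus ?thesis using measure_pmf.emeasure_le_1 by simp
    next
      case False
      hence "R \<noteq> {}" "finite R" "k \<notin> R" using finite_subset[of R "{..<K}"] by auto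
      thus ?thesis by (simp add: emeasure_pmf_single)
    qed
  qed
  also have "\<dots> = emeasure (run nT) ({R. k \<in> R} \<union> ?B)" by (simp add: run_sets)
  also have "\<dots> \<le> emeasure (run nT) {R. k \<in> R} + emeasure (run nT) ?B"
    by (rule emeasure_subadditive) (simp_all add: run_sets)
  also have "\<dots> = emeasure (run nT) {R. k \<in> R}" using run_support by simp
  finally show ?thesis .
qed

lemma out_notbest: "emeasure out (UNIV - {kstar}) \<le> emeasure (run nT) {R. R \<noteq> {kstar}}"
proof -
  have "emeasure out (UNIV - {kstar}) \<le> (\<integral>\<^sup>+R. indicator {R. R \<noteq> {kstar}} R \<partial>run nT)"
    unfolding out_emeasure
  proof (intro nn_integral_mono)
    fix R :: "nat set"
    show "emeasure (measure_pmf (pmf_of_set R)) (UNIV - {kstar}) \<le> indicator {R. R \<noteq> {kstar}} R"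
    proof (cases "R = {kstar}")
      case True thus ?thesis by (simp add: pmf_of_set_singleton)
    next
      case False thus ?thesis using measure_pmf.emeasure_le_1 by simp
    qed
  qed
  also have "\<dots> = emeasure (run nT) {R. R \<noteq> {kstar}}" by (simp add: run_sets)
  finally show ?thesis .
qed

lemma lev_anti: assumes "i < K" "i \<noteq> kstar" "k < K" "k \<noteq> kstar" "\<Delta> i \<le> \<Delta> k" shows "lev k \<le> lev i"
proof -
  have Di: "0 < \<Delta> i" using Delta_pos assms by auto
  have "10 / \<Delta> k \<le> 10 / \<Delta> i" using Di assms(5) by (intro divide_left_mono) auto
  hence "log 2 (10 / \<Delta> k) \<le> log 2 (10 / \<Delta> i)" using Di assms(5) by (subst log_le_cancel_iff) auto
  thus ?thesis unfolding lev_def by (rule floor_mono)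
qed

lemma exists_minlev:
  assumes "k < K" "k \<noteq> kstar" "int (l' - 1) \<le> lev k"
  obtains k0 where "k0 < K" "k0 \<noteq> kstar" "int (l' - 1) \<le> lev k0"
    "\<And>i. i < K \<Longrightarrow> i \<noteq> kstar \<Longrightarrow> int (l' - 1) \<le> lev i \<Longrightarrow> lev k0 \<le> lev i"
proof -
  define S' where "S' = {i. i < K \<and> i \<noteq> kstar \<and> int (l' - 1) \<le> lev i}"
  have fin: "finite S'" by (simp add: S'_def)
  have ne: "S' \<noteq> {}" using assms by (auto simp: S'_def)
  have "Min (lev ` S') \<in> lev ` S'" using fin ne by (intro Min_in) auto
  then obtain k0 where k0: "k0 \<in> S'" "lev k0 = Min (lev ` S')" by auto
  show ?thesis
  proof (rule that)
    show "k0 < K" "k0 \<noteq> kstar" "int (l' - 1) \<le> lev k0" using k0 by (auto simp: S'_def)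
    fix i assume "i < K" "i \<noteq> kstar" "int (l' - 1) \<le> lev i"
    hence "i \<in> S'" by (simp add: S'_def)
    thus "lev k0 \<le> lev i" using k0 fin by auto
  qed
qed

lemma P_le_n:
  assumes "k < K" "k \<noteq> kstar" "10 / sqrt (real T) \<le> \<Delta> k"
  shows "nat (lev k + 1) \<le> nT"
proof -
  have D: "0 < \<Delta> k" using Delta_pos assms by auto
  have sT: "0 < sqrt (real T)" using Tpos by simp
  have "10 / \<Delta> k \<le> sqrt (real T)" using assms(3) D sT by (simp add: field_simps)
  hence "log 2 (10 / \<Delta> k) \<le> log 2 (sqrt (real T))" using D Tpos by (subst log_le_cancel_iff) auto
  moreover have "log 2 (10 * sqrt (real T)) = log 2 10 + log 2 (sqrt (real T))" using sT by (simp add: log_mult)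
  moreover have "3 \<le> log 2 (10::real)"
  proof -
    have "log 2 (8::real) \<le> log 2 10" by simp
    moreover have "log 2 (8::real) = 3"
    proof -
      have "(8::real) = 2 ^ 3" by simp
      thus ?thesis by (simp only: log_pow_cancel)
    qed
    ultimately show ?thesis by simp
  qed
  ultimately have "real_of_int (lev k) + 1 \<le> log 2 (10 * sqrt (real T))" unfolding lev_def by linarith
  hence "lev k + 1 \<le> \<lceil>log 2 (10 * sqrt (real T))\<rceil>" by linarith
  thus ?thesis unfolding n_phases_def by simp
qed

lemma P_le_log: assumes "k < K" "k \<noteq> kstar" shows "real (nat (lev k + 1)) \<le> log 2 (20 / \<Delta> k)"
proof -
  have D: "0 < \<Delta> k" using Delta_pos assms by auto
  have "log 2 (20 / \<Delta> k) = log 2 (2 * (10 / \<Delta> k))" by simp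
  also have "\<dots> = 1 + log 2 (10 / \<Delta> k)" using D by (subst log_mult) auto
  finally have "log 2 (20 / \<Delta> k) = 1 + log 2 (10 / \<Delta> k)" .
  moreover have "0 \<le> lev k" using lev_ge3[OF assms] by simp
  ultimately show ?thesis unfolding lev_def by simp
qed

end



context sris_ctx begin

lemma measure_le_from_emeasure:
  assumes "prob_space N" "emeasure N A \<le> ennreal x" "0 \<le> x"
  shows "measure N A \<le> x"
proof -
  interpret prob_space N by (rule assms(1))
  show ?thesis using assms(2,3) by (simp add: emeasure_eq_measure ennreal_le_iff)
qed

lemma arm_bound:
  assumes k: "k < K" "k \<noteq> kstar" "10 / sqrt (real T) \<le> \<Delta> k"
  defines "Hbk \<equiv> Max (Hterm K MM c B \<Delta> ` {l. l < K \<and> \<Delta> l \<ge> \<Delta> k})"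
  shows "measure out {k} \<le> 2 * real K ^ 2 * log 2 (20 / \<Delta> k) * exp (- real T / (2 * Hbk * hh))"
proof -
  define Pk where "Pk = nat (lev k + 1)"
  have lev0: "0 \<le> lev k" using lev_ge3[OF k(1,2)] by simp
  have Pk1: "1 \<le> Pk" "int (Pk - 1) = lev k" using lev0 by (auto simp: Pk_def)
  have finS: "finite {l. l < K \<and> \<Delta> l \<ge> \<Delta> k}" by simp
  have Hk_le: "Hterm K MM c B \<Delta> i \<le> Hbk" if "i < K" "\<Delta> i \<ge> \<Delta> k" for i
    unfolding Hbk_def using finS that by (intro Max_ge) auto
  have Hpos: "0 < Hbk" using Hk_le[OF k(1) order_refl] Hterm_pos[OF k(1,2)] by linarith
  have E0: "0 \<le> exp (- real T / (2 * Hbk * hh))" by simp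
  have inv: "emeasure (run Pk) {R. \<not> Inv Pk R} \<le> ennreal (real Pk * (2 * real K * exp (- real T / (2 * Hbk * hh))))"
  proof (rule run_inv[OF Hpos])
    fix l' assume l': "1 \<le> l'" "l' \<le> Pk"
    have ll: "int (l' - 1) \<le> lev k" using l' Pk1 by linarith
    obtain k0 where k0: "k0 < K" "k0 \<noteq> kstar" "int (l' - 1) \<le> lev k0"
      "\<And>i. i < K \<Longrightarrow> i \<noteq> kstar \<Longrightarrow> int (l' - 1) \<le> lev i \<Longrightarrow> lev k0 \<le> lev i"
      using exists_minlev[OF k(1,2) ll] by blast
    show "\<exists>k'. k' < K \<and> k' \<noteq> kstar \<and> int (l' - 1) \<le> lev k' \<and>
       (\<forall>i. i < K \<longrightarrow> i \<noteq> kstar \<longrightarrow> int (l' - 1) \<le> lev i \<longrightarrow> lev k' \<le> lev i) \<and> Hterm K MM c B \<Delta> k' \<le> Hbk"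
    proof (cases "lev k0 = lev k")
      case True
      show ?thesis
        by (rule exI[of _ k]) (use k ll k0 True Hk_le[OF k(1) order_refl] in auto)
    next
      case False
      hence "lev k0 < lev k" using k0(4)[OF k(1,2) ll] by linarith
      have "\<Delta> k \<le> \<Delta> k0"
      proof (rule ccontr)
        assume "\<not> \<Delta> k \<le> \<Delta> k0"
        hence "lev k \<le> lev k0" using lev_anti[OF k0(1,2) k(1,2)] by simp
        thus False using \<open>lev k0 < lev k\<close> by simp
      qed
      thus ?thesis by (intro exI[of _ k0]) (use k0 Hk_le[OF k0(1)] in auto)
    qed
  qed
  have zero: "emeasure (phase l'' R) {R. k \<in> R} = 0" if "R \<notin> {R. k \<in> R}" for l'' R
    by (rule phase_zero) (use that in auto)
  have "emeasure out {k} \<le> emeasure (run nT) {R. k \<in> R}" by (rule out_single)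
  also have "\<dots> \<le> emeasure (run Pk) {R. k \<in> R}"
    by (rule run_mono[OF zero]) (assumption, unfold Pk_def, rule P_le_n[OF k])
  also have "\<dots> \<le> emeasure (run Pk) {R. \<not> Inv Pk R}"
  proof (rule emeasure_mono)
    show "{R. k \<in> R} \<subseteq> {R. \<not> Inv Pk R}" using k Pk1 by (auto simp: Inv_def)
  qed (simp add: run_sets)
  also note inv
  finally have em: "emeasure out {k} \<le> ennreal (real Pk * (2 * real K * exp (- real T / (2 * Hbk * hh))))" .
  have "measure out {k} \<le> real Pk * (2 * real K * exp (- real T / (2 * Hbk * hh)))"
    by (rule measure_le_from_emeasure[OF out_prob em]) simp
  also have "\<dots> \<le> log 2 (20 / \<Delta> k) * (2 * real K ^ 2 * exp (- real T / (2 * Hbk * hh)))"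
  proof -
    have h1: "real Pk \<le> log 2 (20 / \<Delta> k)" unfolding Pk_def by (rule P_le_log[OF k(1,2)])
    have "real K \<le> real K ^ 2" using k by (simp add: power2_eq_square)
    hence h2: "2 * real K * exp (- real T / (2 * Hbk * hh)) \<le> 2 * real K ^ 2 * exp (- real T / (2 * Hbk * hh))"
      using E0 by (intro mult_right_mono) auto
    have h3: "0 \<le> log 2 (20 / \<Delta> k)" using h1 by (smt (verit) of_nat_0_le_iff)
    have h4: "0 \<le> 2 * real K * exp (- real T / (2 * Hbk * hh))" by simp
    show ?thesis by (rule mult_mono[OF h1 h2 h3 h4])
  qed
  finally show ?thesis by (simp add: algebra_simps)
qed

lemma err_bound:
  assumes K2: "2 \<le> K" and big: "\<And>k. k < K \<Longrightarrow> k \<noteq> kstar \<Longrightarrow> 10 / sqrt (real T) \<le> \<Delta> k"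
  defines "Hb \<equiv> Max (Hterm K MM c B \<Delta> ` {k. k < K \<and> k \<noteq> kstar})"
    and "Dm \<equiv> Min (\<Delta> ` {k. k < K \<and> k \<noteq> kstar})"
  shows "measure out (UNIV - {kstar}) \<le> 2 * real K ^ 2 * log 2 (20 / Dm) * exp (- real T / (2 * Hb * hh))"
proof -
  define NB where "NB = {k. k < K \<and> k \<noteq> kstar}"
  have finNB: "finite NB" by (simp add: NB_def)
  have neNB: "NB \<noteq> {}"
  proof -
    obtain k where "k < K" "k \<noteq> kstar" using K2 kstar by (metis less_le_trans less_2_cases_iff not_less_eq)
    thus ?thesis by (auto simp: NB_def)
  qed
  have "Dm \<in> \<Delta> ` NB" unfolding Dm_def NB_def[symmetric] using finNB neNB by (intro Min_in) auto
  then obtain km where km: "km \<in> NB" "\<Delta> km = Dm" by auto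
  have kmK: "km < K" "km \<noteq> kstar" using km by (auto simp: NB_def)
  have levmax: "lev i \<le> lev km" if "i < K" "i \<noteq> kstar" for i
  proof -
    have "Dm \<le> \<Delta> i" unfolding Dm_def using that by (intro Min_le) auto
    thus ?thesis using lev_anti[OF kmK that] km by simp
  qed
  define Pm where "Pm = nat (lev km + 1)"
  have lev0: "0 \<le> lev km" using lev_ge3[OF kmK] by simp
  have Pm1: "1 \<le> Pm" "int (Pm - 1) = lev km" using lev0 by (auto simp: Pm_def)
  have Hk_le: "Hterm K MM c B \<Delta> i \<le> Hb" if "i < K" "i \<noteq> kstar" for i
    unfolding Hb_def using that by (intro Max_ge) auto
  have Hpos: "0 < Hb" using Hk_le[OF kmK] Hterm_pos[OF kmK] by linarith
  have E0: "0 \<le> exp (- real T / (2 * Hb * hh))" by simp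
  have inv: "emeasure (run Pm) {R. \<not> Inv Pm R} \<le> ennreal (real Pm * (2 * real K * exp (- real T / (2 * Hb * hh))))"
  proof (rule run_inv[OF Hpos])
    fix l' assume l': "1 \<le> l'" "l' \<le> Pm"
    have ll: "int (l' - 1) \<le> lev km" using l' Pm1 by linarith
    obtain k0 where k0: "k0 < K" "k0 \<noteq> kstar" "int (l' - 1) \<le> lev k0"
      "\<And>i. i < K \<Longrightarrow> i \<noteq> kstar \<Longrightarrow> int (l' - 1) \<le> lev i \<Longrightarrow> lev k0 \<le> lev i"
      using exists_minlev[OF kmK ll] by blast
    show "\<exists>k'. k' < K \<and> k' \<noteq> kstar \<and> int (l' - 1) \<le> lev k' \<and>
       (\<forall>i. i < K \<longrightarrow> i \<noteq> kstar \<longrightarrow> int (l' - 1) \<le> lev i \<longrightarrow> lev k' \<le> lev i) \<and> Hterm K MM c B \<Delta> k' \<le> Hb"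
      by (intro exI[of _ k0]) (use k0 Hk_le[OF k0(1,2)] in auto)
  qed
  have zero: "emeasure (phase l'' R) {R. R \<noteq> {kstar}} = 0" if "R \<notin> {R. R \<noteq> {kstar}}" for l'' R
    by (rule phase_zero) (use that in auto)
  have "emeasure out (UNIV - {kstar}) \<le> emeasure (run nT) {R. R \<noteq> {kstar}}" by (rule out_notbest)
  also have "\<dots> \<le> emeasure (run Pm) {R. R \<noteq> {kstar}}"
    by (rule run_mono[OF zero]) (assumption, unfold Pm_def, rule P_le_n[OF kmK big[OF kmK]])
  also have "\<dots> \<le> emeasure (run Pm) {R. \<not> Inv Pm R}"
  proof (rule emeasure_mono)
    have "R = {kstar}" if "Inv Pm R" for R
    proof -
      have "i = kstar" if i: "i \<in> R" for i
      proof (rule ccontr)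
        assume ne: "i \<noteq> kstar"
        have "i < K" using i \<open>Inv Pm R\<close> by (auto simp: Inv_def)
        have "int Pm \<le> lev i" using i ne \<open>Inv Pm R\<close> by (auto simp: Inv_def)
        moreover have "lev i \<le> lev km" by (rule levmax[OF \<open>i < K\<close> ne])
        ultimately show False using Pm1 by linarith
      qed
      thus ?thesis using \<open>Inv Pm R\<close> by (auto simp: Inv_def)
    qed
    thus "{R. R \<noteq> {kstar}} \<subseteq> {R. \<not> Inv Pm R}" by blast
  qed (simp add: run_sets)
  also note inv
  finally have em: "emeasure out (UNIV - {kstar}) \<le> ennreal (real Pm * (2 * real K * exp (- real T / (2 * Hb * hh))))" .
  have "measure out (UNIV - {kstar}) \<le> real Pm * (2 * real K * exp (- real T / (2 * Hb * hh)))"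
    by (rule measure_le_from_emeasure[OF out_prob em]) simp
  also have "\<dots> \<le> log 2 (20 / Dm) * (2 * real K ^ 2 * exp (- real T / (2 * Hb * hh)))"
  proof -
    have h1: "real Pm \<le> log 2 (20 / Dm)" unfolding Pm_def km(2)[symmetric] by (rule P_le_log[OF kmK])
    have "real K \<le> real K ^ 2" using K2 by (simp add: power2_eq_square)
    hence h2: "2 * real K * exp (- real T / (2 * Hb * hh)) \<le> 2 * real K ^ 2 * exp (- real T / (2 * Hb * hh))"
      using E0 by (intro mult_right_mono) auto
    have h3: "0 \<le> log 2 (20 / Dm)" using h1 by (smt (verit) of_nat_0_le_iff)
    have h4: "0 \<le> 2 * real K * exp (- real T / (2 * Hb * hh))" by simp
    show ?thesis by (rule mult_mono[OF h1 h2 h3 h4])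
  qed
  finally show ?thesis by (simp add: algebra_simps)
qed

end



context sris_ctx begin

lemma out_sets: "sets out = UNIV"
proof -
  have ne: "space (run nT) \<noteq> {}" using run_prob by (simp add: prob_space.not_empty)
  have "sets out = sets (count_space (UNIV :: nat set))" unfolding sris_output_def
    by (rule sets_bind[OF _ ne]) simp
  thus ?thesis by simp
qed

lemma regret:
  "(\<Sum>k\<in>{k. k < K \<and> k \<noteq> kstar}. \<Delta> k * measure out {k})
     \<le> 2 * real K ^ 2 *
        (\<Sum>k\<in>{k. k < K \<and> k \<noteq> kstar \<and> \<Delta> k \<ge> 10 / sqrt (real T)}.
            \<Delta> k * log 2 (20 / \<Delta> k) *
            exp (- real T / (2 * Max (Hterm K MM c B \<Delta> ` {l. l < K \<and> \<Delta> l \<ge> \<Delta> k}) * hh)))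
       + 10 / sqrt (real T) *
         (if \<exists>k. k < K \<and> k \<noteq> kstar \<and> \<Delta> k < 10 / sqrt (real T) then 1 else 0)"
proof -
  interpret O: prob_space out by (rule out_prob)
  define NB where "NB = {k. k < K \<and> k \<noteq> kstar}"
  define Bg where "Bg = {k. k < K \<and> k \<noteq> kstar \<and> \<Delta> k \<ge> 10 / sqrt (real T)}"
  define Sm where "Sm = {k. k < K \<and> k \<noteq> kstar \<and> \<Delta> k < 10 / sqrt (real T)}"
  define Hb where "Hb k = Max (Hterm K MM c B \<Delta> ` {l. l < K \<and> \<Delta> l \<ge> \<Delta> k})" for k
  have NBu: "NB = Bg \<union> Sm" "Bg \<inter> Sm = {}" by (auto simp: NB_def Bg_def Sm_def)
  have fin: "finite Bg" "finite Sm" by (auto simp: Bg_def Sm_def)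
  have "(\<Sum>k\<in>NB. \<Delta> k * measure out {k}) = (\<Sum>k\<in>Bg. \<Delta> k * measure out {k}) + (\<Sum>k\<in>Sm. \<Delta> k * measure out {k})"
    unfolding NBu(1) by (rule sum.union_disjoint[OF fin NBu(2)])
  also have "(\<Sum>k\<in>Bg. \<Delta> k * measure out {k}) \<le> (\<Sum>k\<in>Bg. \<Delta> k * (2 * real K ^ 2 * log 2 (20 / \<Delta> k) * exp (- real T / (2 * Hb k * hh))))"
  proof (intro sum_mono mult_left_mono)
    fix k assume k: "k \<in> Bg"
    show "measure out {k} \<le> 2 * real K ^ 2 * log 2 (20 / \<Delta> k) * exp (- real T / (2 * Hb k * hh))"
      unfolding Hb_def by (rule arm_bound) (use k in \<open>auto simp: Bg_def\<close>)
    show "0 \<le> \<Delta> k" using k Delta_nonneg by (auto simp: Bg_def)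
  qed
  also have "\<dots> = 2 * real K ^ 2 * (\<Sum>k\<in>Bg. \<Delta> k * log 2 (20 / \<Delta> k) * exp (- real T / (2 * Hb k * hh)))"
    by (simp add: sum_distrib_left algebra_simps)
  also have "(\<Sum>k\<in>Sm. \<Delta> k * measure out {k}) \<le> 10 / sqrt (real T) * (if Sm \<noteq> {} then 1 else 0)"
  proof (cases "Sm = {}")
    case True thus ?thesis by simp
  next
    case False
    have "(\<Sum>k\<in>Sm. \<Delta> k * measure out {k}) \<le> (\<Sum>k\<in>Sm. 10 / sqrt (real T) * measure out {k})"
      by (intro sum_mono mult_right_mono) (auto simp: Sm_def)
    also have "\<dots> = 10 / sqrt (real T) * measure out Sm"
      using O.finite_measure_eq_sum_singleton[OF fin(2)] by (simp add: out_sets sum_distrib_left)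
    also have "\<dots> \<le> 10 / sqrt (real T) * 1" by (intro mult_left_mono O.prob_le_1) auto
    finally show ?thesis using False by simp
  qed
  finally show ?thesis
    by (simp add: NB_def Bg_def Sm_def Hb_def)
qed

end

theorem theorem5:
  fixes K :: nat
    and q :: "'p::finite pmf"
    and P :: "nat \<Rightarrow> 'p \<Rightarrow> 'v::finite pmf"
    and Yk :: "'v \<Rightarrow> 'p \<Rightarrow> real measure"
    and c :: "nat \<Rightarrow> real" and B :: real
    and nu :: "nat set \<Rightarrow> nat \<Rightarrow> real"
    and T :: nat and kstar :: nat
  defines "\<mu> \<equiv> arm_mean q P Yk"
      and "M \<equiv> Mdiv q P"
  defines "\<Delta> \<equiv> (\<lambda>k. \<mu> kstar - \<mu> k)"
  defines "Hbar_k \<equiv> (\<lambda>k. Max (Hterm K M c B \<Delta> ` {l. l < K \<and> \<Delta> l \<ge> \<Delta> k}))"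
      and "Hbar \<equiv> Max (Hterm K M c B \<Delta> ` {k. k < K \<and> k \<noteq> kstar})"
      and "Dmin \<equiv> Min (\<Delta> ` {k. k < K \<and> k \<noteq> kstar})"
      and "out \<equiv> sris_output K q P Yk nu T"
  assumes Yk: "\<And>v p. prob_space (Yk v p) \<and> sets (Yk v p) = sets borel \<and>
                 (AE y in Yk v p. 0 \<le> y \<and> y \<le> 1)"
      and abs_cont: "\<And>k j p v. k < K \<Longrightarrow> j < K \<Longrightarrow> p \<in> set_pmf q \<Longrightarrow>
                 (pmf (P k p) v > 0 \<longleftrightarrow> pmf (P j p) v > 0)"
      and costs: "\<And>i. i < K \<Longrightarrow> 0 \<le> c i"
      and feas: "\<exists>\<nu>. feasible K c B \<nu>"
      and nu: "\<And>R. R \<noteq> {} \<Longrightarrow> R \<subseteq> {..<K} \<Longrightarrow> is_alloc_maximizer K M c B R (nu R)"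
      and T: "0 < T"
      and best: "kstar < K" "\<And>k. k < K \<Longrightarrow> k \<noteq> kstar \<Longrightarrow> \<mu> k < \<mu> kstar"
  shows "((\<Sum>k\<in>{k. k < K \<and> k \<noteq> kstar}. \<Delta> k * measure out {k})
           \<le> 2 * real K ^ 2 *
              (\<Sum>k\<in>{k. k < K \<and> k \<noteq> kstar \<and> \<Delta> k \<ge> 10 / sqrt (real T)}.
                  \<Delta> k * log 2 (20 / \<Delta> k) *
                  exp (- real T / (2 * Hbar_k k * hlog (n_phases T))))
             + 10 / sqrt (real T) *
               (if \<exists>k. k < K \<and> k \<noteq> kstar \<and> \<Delta> k < 10 / sqrt (real T) then 1 else 0))
         \<and> (2 \<le> K \<longrightarrow> (\<forall>k. k < K \<and> k \<noteq> kstar \<longrightarrow> \<Delta> k \<ge> 10 / sqrt (real T)) \<longrightarrow>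
           measure out (UNIV - {kstar})
             \<le> 2 * real K ^ 2 * log 2 (20 / Dmin) *
                exp (- real T / (2 * Hbar * hlog (n_phases T))))"
proof -
  interpret S: sris_ctx K q P Yk c B nu T kstar
  proof (unfold_locales)
    show "\<And>v p. prob_space (Yk v p) \<and> sets (Yk v p) = sets borel \<and> (AE y in Yk v p. 0 \<le> y \<and> y \<le> 1)"
      by (rule Yk)
    show "\<And>k j p v. k < K \<Longrightarrow> j < K \<Longrightarrow> p \<in> set_pmf q \<Longrightarrow> (0 < pmf (P k p) v) = (0 < pmf (P j p) v)"
      by (rule abs_cont)
    show "\<exists>\<nu>. feasible K c B \<nu>" by (rule feas)
    show "\<And>R. R \<noteq> {} \<Longrightarrow> R \<subseteq> {..<K} \<Longrightarrow> is_alloc_maximizer K (Mdiv q P) c B R (nu R)"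
      using nu unfolding M_def .
    show "0 < T" by (rule T)
    show "kstar < K" by (rule best(1))
    show "\<And>k. k < K \<Longrightarrow> k \<noteq> kstar \<Longrightarrow> arm_mean q P Yk k < arm_mean q P Yk kstar"
      using best(2) unfolding \<mu>_def .
  qed
  have Deq: "\<Delta> = S.\<Delta>" unfolding \<Delta>_def \<mu>_def by (rule ext) (simp add: S.\<Delta>_def)
  have part1: "(\<Sum>k\<in>{k. k < K \<and> k \<noteq> kstar}. \<Delta> k * measure out {k})
           \<le> 2 * real K ^ 2 *
              (\<Sum>k\<in>{k. k < K \<and> k \<noteq> kstar \<and> \<Delta> k \<ge> 10 / sqrt (real T)}.
                  \<Delta> k * log 2 (20 / \<Delta> k) *
                  exp (- real T / (2 * Hbar_k k * hlog (n_phases T))))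
             + 10 / sqrt (real T) *
               (if \<exists>k. k < K \<and> k \<noteq> kstar \<and> \<Delta> k < 10 / sqrt (real T) then 1 else 0)"
    using S.regret unfolding Hbar_k_def out_def Deq M_def S.hh_def .
  have part2: "2 \<le> K \<longrightarrow> (\<forall>k. k < K \<and> k \<noteq> kstar \<longrightarrow> \<Delta> k \<ge> 10 / sqrt (real T)) \<longrightarrow>
           measure out (UNIV - {kstar})
             \<le> 2 * real K ^ 2 * log 2 (20 / Dmin) *
                exp (- real T / (2 * Hbar * hlog (n_phases T)))"
  proof (intro impI)
    assume K2: "2 \<le> K" and big: "\<forall>k. k < K \<and> k \<noteq> kstar \<longrightarrow> \<Delta> k \<ge> 10 / sqrt (real T)"
    have big': "\<And>k. k < K \<Longrightarrow> k \<noteq> kstar \<Longrightarrow> 10 / sqrt (real T) \<le> S.\<Delta> k" using big Deq by auto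
    show "measure out (UNIV - {kstar}) \<le> 2 * real K ^ 2 * log 2 (20 / Dmin) *
                exp (- real T / (2 * Hbar * hlog (n_phases T)))"
      using S.err_bound[OF K2 big'] unfolding Hbar_def Dmin_def out_def Deq M_def S.hh_def .
  qed
  show ?thesis using part1 part2 by blast
qed

end
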